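(* Let $(\mu_t)_{t\ge0}$ be a Sinkhorn potential flow of $V$. Then for a.e. $t$ at which $s\mapsto E(\mu_s)$ is differentiable, $$\frac{d}{dt}E(\mu_t)=-\mathbf g_{\mu_t}(\dot\mu_t,\dot\mu_t).$$
   Context: Standing setting: $(\mathcal X,\mathsf d)$ compact metric space; $\varepsilon>0$; $c$ symmetric, nonnegative, continuous, $k_c:=\exp(-c/\varepsilon)$ a positive definite universal kernel with RKHS $\mathcal H_c$; $V\in C(\mathcal X)$, $E(\mu)=\int Vd\mu$. Schrödinger potentials: $T_\varepsilon(f,\mu)(y):=-\varepsilon\log\int\exp((f(x)-c(x,y))/\varepsilon)d\mu(x)$; $f_\mu\in C(\mathcal X)$ the unique solution of $f_\mu=T_\varepsilon(f_\mu,\mu)$. $k_\mu(x,y):=\exp((f_\mu(x)+f_\mu(y)-c(x,y))/\varepsilon)$ with RKHS $\mathcal H_\mu$; $H_c,H_\mu$ Riesz isomorphisms from the duals (on measures, integration against the kernel); $K_\mu[\phi]:=H_\mu[\phi\mu]$; $\mathrm{Id}-K_\mu^2$ invertible on $C(\mathcal X)/\mathbb R$. $B(\mu):=\exp(-f_\mu/\varepsilon)$. $T_\mu:=\{\sigma\in\mathcal H_\mu^*:\langle\sigma,1\rangle=0\}$, $\mathbf g_\mu(\sigma_1,\sigma_2):=\frac\varepsilon2\langle\sigma_1,(\mathrm{Id}-K_\mu^2)^{-1}H_\mu[\sigma_2]\rangle$, a continuous quadratic form on $T_\mu$. A Sinkhorn potential flow is a curve $(\mu_t)_{t\ge0}$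 in $\mathcal P(\mathcal X)$ with $t\mapsto B(\mu_t)\in\mathscr H^1_{loc}([0,\infty);\mathcal H_c)$ (so that for a.e. $t$ the weak-* derivative $\dot\mu_t\in T_{\mu_t}$ in $\mathcal H_{\mu_t}^*$ exists) such that for a.e. $t$ there exist $p_t\in C(\mathcal X)$, $p_t\le0$, $p_t=0$ on $\operatorname{supp}\mu_t$, and $C_t\in\mathbb R$ with $\frac\varepsilon2(\mathrm{Id}-K_{\mu_t}^2)^{-1}H_{\mu_t}[\dot\mu_t]+V+p_t=C_t$. *)

theory Defs
  imports "HOL-Probability.Probability"
begin

definition fsupp :: "('a \<Rightarrow> real) \<Rightarrow> 'a set" where
  "fsupp a = {y. a y \<noteq> 0}"

definition pre_fun :: "('a \<Rightarrow> 'a \<Rightarrow> real) \<Rightarrow> ('a \<Rightarrow> real) \<Rightarrow> 'a \<Rightarrow> real" where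
  "pre_fun k a = (\<lambda>x. \<Sum>y\<in>fsupp a. a y * k y x)"

definition pre_sq :: "('a \<Rightarrow> 'a \<Rightarrow> real) \<Rightarrow> ('a \<Rightarrow> real) \<Rightarrow> real" where
  "pre_sq k a = (\<Sum>y\<in>fsupp a. \<Sum>z\<in>fsupp a. a y * a z * k y z)"

definition psd_kernel :: "('a \<Rightarrow> 'a \<Rightarrow> real) \<Rightarrow> bool" where
  "psd_kernel k \<longleftrightarrow> (\<forall>x y. k x y = k y x) \<and> (\<forall>a. finite (fsupp a) \<longrightarrow> pre_sq k a \<ge> 0)"

definition rkhs_approx :: "('a \<Rightarrow> 'a \<Rightarrow> real) \<Rightarrow> ('a \<Rightarrow> real) \<Rightarrow> (nat \<Rightarrow> 'a \<Rightarrow> real) \<Rightarrow> bool" where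
  "rkhs_approx k f A \<longleftrightarrow>
     (\<forall>n. finite (fsupp (A n))) \<and>
     (\<forall>x. (\<lambda>n. pre_fun k (A n) x) \<longlonglongrightarrow> f x) \<and>
     (\<forall>e>0. \<exists>N. \<forall>m\<ge>N. \<forall>n\<ge>N. pre_sq k (\<lambda>y. A m y - A n y) < e)"

definition rkhs :: "('a \<Rightarrow> 'a \<Rightarrow> real) \<Rightarrow> ('a \<Rightarrow> real) set" where
  "rkhs k = {f. \<exists>A. rkhs_approx k f A}"

definition rkhs_norm :: "('a \<Rightarrow> 'a \<Rightarrow> real) \<Rightarrow> ('a \<Rightarrow> real) \<Rightarrow> real" where
  "rkhs_norm k f = (THE r. \<exists>A. rkhs_approx k f A \<and> (\<lambda>n. sqrt (pre_sq k (A n))) \<longlonglongrightarrow> r)"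

definition universal_kernel :: "('a::topological_space \<Rightarrow> 'a \<Rightarrow> real) \<Rightarrow> bool" where
  "universal_kernel k \<longleftrightarrow>
     (\<forall>g. continuous_on UNIV g \<longrightarrow> (\<forall>e>0. \<exists>h\<in>rkhs k. \<forall>x. \<bar>g x - h x\<bar> < e))"

definition in_dual :: "('a \<Rightarrow> 'a \<Rightarrow> real) \<Rightarrow> (('a \<Rightarrow> real) \<Rightarrow> real) \<Rightarrow> bool" where
  "in_dual k \<sigma> \<longleftrightarrow>
     (\<forall>f\<in>rkhs k. \<forall>g\<in>rkhs k. \<sigma> (\<lambda>x. f x + g x) = \<sigma> f + \<sigma> g) \<and>
     (\<forall>f\<in>rkhs k. \<forall>r. \<sigma> (\<lambda>x. r * f x) = r * \<sigma> f) \<and>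
     (\<exists>C. \<forall>f\<in>rkhs k. \<bar>\<sigma> f\<bar> \<le> C * rkhs_norm k f)"

definition is_prob :: "'a::topological_space measure \<Rightarrow> bool" where
  "is_prob M \<longleftrightarrow> prob_space M \<and> sets M = sets borel"

definition msupport :: "'a::topological_space measure \<Rightarrow> 'a set" where
  "msupport M = {x. \<forall>U. open U \<longrightarrow> x \<in> U \<longrightarrow> emeasure M U > 0}"

definition energy :: "('a \<Rightarrow> real) \<Rightarrow> 'a measure \<Rightarrow> real" where
  "energy V M = (\<integral>x. V x \<partial>M)"

definition T_eps :: "real \<Rightarrow> ('a \<Rightarrow> 'a \<Rightarrow> real) \<Rightarrow> ('a \<Rightarrow> real) \<Rightarrow> 'a measure \<Rightarrow> 'a \<Rightarrow> real" where
  "T_eps eps c f M y = - eps * ln (\<integral>x. exp ((f x - c x y) / eps) \<partial>M)"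

definition schr_pot :: "real \<Rightarrow> ('a::topological_space \<Rightarrow> 'a \<Rightarrow> real) \<Rightarrow> 'a measure \<Rightarrow> 'a \<Rightarrow> real" where
  "schr_pot eps c M = (THE f. continuous_on UNIV f \<and> f = T_eps eps c f M)"

definition kmu :: "real \<Rightarrow> ('a::topological_space \<Rightarrow> 'a \<Rightarrow> real) \<Rightarrow> 'a measure \<Rightarrow> 'a \<Rightarrow> 'a \<Rightarrow> real" where
  "kmu eps c M x y = exp ((schr_pot eps c M x + schr_pot eps c M y - c x y) / eps)"

definition kc :: "real \<Rightarrow> ('a \<Rightarrow> 'a \<Rightarrow> real) \<Rightarrow> 'a \<Rightarrow> 'a \<Rightarrow> real" where
  "kc eps c x y = exp (- c x y / eps)"

text \<open>K_mu[phi] = H_mu[phi mu].\<close>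
definition Kop :: "real \<Rightarrow> ('a::topological_space \<Rightarrow> 'a \<Rightarrow> real) \<Rightarrow> 'a measure \<Rightarrow> ('a \<Rightarrow> real) \<Rightarrow> 'a \<Rightarrow> real" where
  "Kop eps c M \<phi> x = (\<integral>y. kmu eps c M x y * \<phi> y \<partial>M)"

definition Hmap :: "real \<Rightarrow> ('a::topological_space \<Rightarrow> 'a \<Rightarrow> real) \<Rightarrow> 'a measure \<Rightarrow> (('a \<Rightarrow> real) \<Rightarrow> real) \<Rightarrow> 'a \<Rightarrow> real" where
  "Hmap eps c M \<sigma> x = \<sigma> (\<lambda>y. kmu eps c M x y)"

definition Bfun :: "real \<Rightarrow> ('a::topological_space \<Rightarrow> 'a \<Rightarrow> real) \<Rightarrow> 'a measure \<Rightarrow> 'a \<Rightarrow> real" where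
  "Bfun eps c M x = exp (- schr_pot eps c M x / eps)"

definition in_T :: "real \<Rightarrow> ('a::topological_space \<Rightarrow> 'a \<Rightarrow> real) \<Rightarrow> 'a measure \<Rightarrow> (('a \<Rightarrow> real) \<Rightarrow> real) \<Rightarrow> bool" where
  "in_T eps c M \<sigma> \<longleftrightarrow> in_dual (kmu eps c M) \<sigma> \<and> \<sigma> (\<lambda>_. 1) = 0"

text \<open>(Id - K_mu^2)^{-1} on C(X)/R: a continuous representative u with (Id - K_mu^2) u = g mod constants.\<close>
definition inv_res :: "real \<Rightarrow> ('a::topological_space \<Rightarrow> 'a \<Rightarrow> real) \<Rightarrow> 'a measure \<Rightarrow> ('a \<Rightarrow> real) \<Rightarrow> 'a \<Rightarrow> real" where
  "inv_res eps c M g = (SOME u. continuous_on UNIV u \<and>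
      (\<exists>C. \<forall>x. u x - Kop eps c M (Kop eps c M u) x - g x = C))"

definition gmetric :: "real \<Rightarrow> ('a::topological_space \<Rightarrow> 'a \<Rightarrow> real) \<Rightarrow> 'a measure \<Rightarrow>
    (('a \<Rightarrow> real) \<Rightarrow> real) \<Rightarrow> (('a \<Rightarrow> real) \<Rightarrow> real) \<Rightarrow> real" where
  "gmetric eps c M \<sigma>1 \<sigma>2 = eps / 2 * \<sigma>1 (inv_res eps c M (Hmap eps c M \<sigma>2))"

definition wstar_deriv :: "real \<Rightarrow> ('a::topological_space \<Rightarrow> 'a \<Rightarrow> real) \<Rightarrow> (real \<Rightarrow> 'a measure) \<Rightarrow> real \<Rightarrow>
    (('a \<Rightarrow> real) \<Rightarrow> real) \<Rightarrow> bool" where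
  "wstar_deriv eps c \<mu> t \<sigma> \<longleftrightarrow> in_dual (kmu eps c (\<mu> t)) \<sigma> \<and>
     (\<forall>\<phi>\<in>rkhs (kmu eps c (\<mu> t)).
        ((\<lambda>s. ((\<integral>x. \<phi> x \<partial>\<mu> s) - (\<integral>x. \<phi> x \<partial>\<mu> t)) / (s - t)) \<longlongrightarrow> \<sigma> \<phi>) (at t within {0..}))"

text \<open>b belongs to H^1_loc([0,oo); H_k): b and a weak derivative b' are locally L^2 in H_k
  and b(t) - b(s) is the (Bochner) integral of b' over [s,t], tested against point evaluations.\<close>
definition h1loc :: "('a \<Rightarrow> 'a \<Rightarrow> real) \<Rightarrow> (real \<Rightarrow> 'a \<Rightarrow> real) \<Rightarrow> bool" where
  "h1loc k b \<longleftrightarrow> (\<exists>b'.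
     (AE t in lborel. t \<ge> 0 \<longrightarrow> b t \<in> rkhs k \<and> b' t \<in> rkhs k) \<and>
     (\<forall>x. (\<lambda>t. b t x) \<in> borel_measurable lborel \<and> (\<lambda>t. b' t x) \<in> borel_measurable lborel) \<and>
     (\<forall>T\<ge>0. (\<integral>\<^sup>+ t. indicator {0..T} t *
          ennreal ((rkhs_norm k (b t))\<^sup>2 + (rkhs_norm k (b' t))\<^sup>2) \<partial>lborel) < \<infinity>) \<and>
     (AE s in lborel. AE t in lborel. 0 \<le> s \<longrightarrow> s \<le> t \<longrightarrow>
        (\<forall>x. set_integrable lborel {s..t} (\<lambda>r. b' r x) \<and>
             b t x - b s x = set_lebesgue_integral lborel {s..t} (\<lambda>r. b' r x))))"

definition sinkhorn_flow :: "real \<Rightarrow> ('a::topological_space \<Rightarrow> 'a \<Rightarrow> real) \<Rightarrow> ('a \<Rightarrow> real) \<Rightarrow> (real \<Rightarrow> 'a measure) \<Rightarrow> bool" where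
  "sinkhorn_flow eps c V \<mu> \<longleftrightarrow>
     (\<forall>t\<ge>0. is_prob (\<mu> t)) \<and>
     h1loc (kc eps c) (\<lambda>t. Bfun eps c (\<mu> t)) \<and>
     (AE t in lborel. t \<ge> 0 \<longrightarrow>
        (\<exists>\<sigma>. wstar_deriv eps c \<mu> t \<sigma> \<and> in_T eps c (\<mu> t) \<sigma> \<and>
           (\<exists>u p C. continuous_on UNIV u \<and>
              (\<exists>C'. \<forall>x. u x - Kop eps c (\<mu> t) (Kop eps c (\<mu> t) u) x - Hmap eps c (\<mu> t) \<sigma> x = C') \<and>
              continuous_on UNIV p \<and> (\<forall>x. p x \<le> 0) \<and> (\<forall>x\<in>msupport (\<mu> t). p x = 0) \<and>
              (\<forall>x. eps / 2 * u x + V x + p x = C))))"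

end

theory Submission
  imports Defs
begin

locale sk =
  fixes eps :: real and c :: "'a::metric_space \<Rightarrow> 'a \<Rightarrow> real" and M :: "'a measure"
  assumes cpt: "compact (UNIV :: 'a set)"
    and eps: "eps > 0"
    and csym: "\<forall>x y. c x y = c y x" and cnn: "\<forall>x y. c x y \<ge> 0"
    and ccont: "continuous_on UNIV (\<lambda>(x, y). c x y)"
    and prob: "is_prob M"
begin

lemma ps: "prob_space M" using prob by (simp add: is_prob_def)
lemma setsM: "sets M = sets borel" using prob by (simp add: is_prob_def)

lemma meas: "continuous_on UNIV f \<Longrightarrow> (f :: 'a \<Rightarrow> real) \<in> borel_measurable M"
  by (subst measurable_cong_sets[OF setsM refl]) (rule borel_measurable_continuous_onI)

lemma cpt2: "compact (UNIV :: ('a \<times> 'a) set)"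
  using compact_Times[OF cpt cpt] by simp

lemma cbound: "continuous_on UNIV (f::'a \<Rightarrow> real) \<Longrightarrow> \<exists>B. \<forall>x. \<bar>f x\<bar> \<le> B"
proof -
  assume "continuous_on UNIV f"
  then have "compact (f ` UNIV)" using cpt compact_continuous_image by blast
  then have "bounded (f ` UNIV)" by (rule compact_imp_bounded)
  then show ?thesis by (auto simp: bounded_iff)
qed

lemma integ: "continuous_on UNIV (f::'a \<Rightarrow> real) \<Longrightarrow> integrable M f"
proof -
  assume a: "continuous_on UNIV f"
  obtain B where "\<forall>x. \<bar>f x\<bar> \<le> B" using cbound[OF a] by blast
  then show ?thesis
    using prob_space.finite_measure[OF ps] meas[OF a]
    by (intro finite_measure.integrable_const_bound[where B=B]) auto
qed

lemma c1: "continuous_on UNIV (\<lambda>x. c x y)"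
proof -
  have "continuous_on UNIV ((\<lambda>(x, y). c x y) \<circ> (\<lambda>x. (x, y)))"
    by (rule continuous_on_compose) (auto intro!: continuous_intros ccont[THEN continuous_on_subset])
  then show ?thesis by (simp add: o_def)
qed

lemma c2: "continuous_on UNIV (\<lambda>y. c x y)"
  using c1[of x] csym by simp

lemma cmax: "\<exists>Cm\<ge>0. \<forall>x y. c x y \<le> Cm"
proof -
  have "compact ((\<lambda>(x, y). c x y) ` (UNIV \<times> UNIV))"
    using cpt2 ccont by (intro compact_continuous_image) auto
  then have "bounded ((\<lambda>(x, y). c x y) ` (UNIV \<times> UNIV))" by (rule compact_imp_bounded)
  then obtain B where B: "\<forall>x y. \<bar>c x y\<bar> \<le> B" by (auto simp: bounded_iff)
  have "B \<ge> 0" using B abs_ge_zero order_trans by metis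
  moreover have "\<forall>x y. c x y \<le> B" using B abs_ge_self order_trans by metis
  ultimately show ?thesis by blast
qed

lemma cunif: "d > 0 \<Longrightarrow> \<exists>e>0. \<forall>y y'. dist y y' < e \<longrightarrow> (\<forall>x. \<bar>c x y - c x y'\<bar> < d)"
proof -
  assume d: "d > 0"
  have "uniformly_continuous_on (UNIV \<times> UNIV) (\<lambda>(x, y). c x y)"
    using cpt2 ccont by (intro compact_uniformly_continuous) auto
  then obtain e where e: "e > 0" and
    h: "\<forall>p\<in>UNIV \<times> UNIV. \<forall>q\<in>UNIV \<times> UNIV. dist q p < e \<longrightarrow> dist ((\<lambda>(x, y). c x y) q) ((\<lambda>(x, y). c x y) p) < d"
    using d unfolding uniformly_continuous_on_def by metis
  show ?thesis
  proof (intro exI[of _ e] conjI allI impI)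
    fix y y' x :: 'a assume "dist y y' < e"
    then have "dist (x, y) (x, y') < e" by (simp add: dist_Pair_Pair)
    then have "dist (c x y) (c x y') < d" using h by fastforce
    then show "\<bar>c x y - c x y'\<bar> < d" by (simp add: dist_real_def)
  qed (rule e)
qed

lemma ln_bound: "(a::real) > 0 \<Longrightarrow> b > 0 \<Longrightarrow> a \<le> exp k * b \<Longrightarrow> ln a \<le> k + ln b"
proof -
  assume a: "a > 0" "b > 0" "a \<le> exp k * b"
  then have "ln a \<le> ln (exp k * b)" by (subst ln_le_cancel_iff) auto
  also have "\<dots> = k + ln b" using a by (simp add: ln_mult)
  finally show ?thesis .
qed

definition Lf :: "('a \<Rightarrow> real) \<Rightarrow> 'a \<Rightarrow> real" where
  "Lf g y = (\<integral>x. exp ((g x - c x y) / eps) \<partial>M)"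

lemma T_Lf: "T_eps eps c g M y = - eps * ln (Lf g y)"
  by (simp add: T_eps_def Lf_def)

lemma cont_int: "continuous_on UNIV g \<Longrightarrow> continuous_on UNIV (\<lambda>x. exp ((g x - c x y) / eps))"
  using eps by (intro continuous_intros c1) auto

lemma int_int: "continuous_on UNIV g \<Longrightarrow> integrable M (\<lambda>x. exp ((g x - c x y) / eps))"
  by (intro integ cont_int)

lemma int_le: "integrable M (f::'a \<Rightarrow> real) \<Longrightarrow> integrable M h \<Longrightarrow> (\<And>x. f x \<le> K * h x) \<Longrightarrow>
   integral\<^sup>L M f \<le> K * integral\<^sup>L M h"
proof -
  assume a: "integrable M f" "integrable M h" "\<And>x. f x \<le> K * h x"
  have "integral\<^sup>L M f \<le> integral\<^sup>L M (\<lambda>x. K * h x)"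
    by (rule integral_mono) (use a in auto)
  then show ?thesis by simp
qed

lemma Lf_pos: "continuous_on UNIV g \<Longrightarrow> Lf g y > 0"
proof -
  assume a: "continuous_on UNIV g"
  obtain B where B: "\<forall>x. \<bar>g x\<bar> \<le> B" using cbound[OF a] by blast
  obtain Cm where Cm: "\<forall>x y. c x y \<le> Cm" using cmax by blast
  have "exp ((- B - Cm) / eps) \<le> Lf g y"
  proof -
    have "(\<integral>x. exp ((- B - Cm) / eps) \<partial>M) \<le> Lf g y"
      unfolding Lf_def
    proof (rule integral_mono)
      fix x
      have "- B - Cm \<le> g x - c x y"
        using B[rule_format, of x] Cm[rule_format, of x y] by linarith
      then have "(- B - Cm) / eps \<le> (g x - c x y) / eps"
        using eps by (intro divide_right_mono) auto
      then show "exp ((- B - Cm) / eps) \<le> exp ((g x - c x y) / eps)" by simp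
    qed (auto intro: int_int a integ)
    then show ?thesis using prob_space.prob_space[OF ps] by simp
  qed
  then show ?thesis by (rule less_le_trans[rotated]) simp
qed

lemma Lf_shift: "continuous_on UNIV g \<Longrightarrow> Lf (\<lambda>x. g x + a) y = exp (a / eps) * Lf g y"
proof -
  have "\<And>x. exp ((g x + a - c x y) / eps) = exp (a / eps) * exp ((g x - c x y) / eps)"
    by (simp add: exp_add[symmetric] add_divide_distrib[symmetric] algebra_simps)
  then show ?thesis by (simp add: Lf_def)
qed

lemma T_shift: "continuous_on UNIV g \<Longrightarrow> T_eps eps c (\<lambda>x. g x + a) M y = T_eps eps c g M y - a"
proof -
  assume g: "continuous_on UNIV g"
  have "T_eps eps c (\<lambda>x. g x + a) M y = - eps * ln (exp (a / eps) * Lf g y)"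
    by (simp add: T_Lf Lf_shift g)
  also have "\<dots> = - eps * (a / eps + ln (Lf g y))"
    using Lf_pos[OF g, of y] by (simp add: ln_mult)
  also have "\<dots> = T_eps eps c g M y - a"
    using eps by (simp add: T_Lf algebra_simps)
  finally show ?thesis .
qed

lemma Lf_ratio:
  assumes g: "continuous_on UNIV g" and h: "continuous_on UNIV h"
    and le: "\<And>x. exp ((g x - c x y) / eps) \<le> K * exp ((h x - c x y') / eps)"
  shows "Lf g y \<le> K * Lf h y'"
  unfolding Lf_def by (rule int_le) (auto intro: int_int g h le)

lemma T_nonexp:
  assumes g: "continuous_on UNIV g" and h: "continuous_on UNIV h" and d: "\<forall>x. \<bar>g x - h x\<bar> \<le> d"
  shows "\<bar>T_eps eps c g M y - T_eps eps c h M y\<bar> \<le> d"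
proof -
  have r1: "Lf g y \<le> exp (d / eps) * Lf h y"
  proof (rule Lf_ratio[OF g h])
    fix x
    have "g x - c x y \<le> d + (h x - c x y)"
      using d[rule_format, of x] by linarith
    then have "(g x - c x y) / eps \<le> (d + (h x - c x y)) / eps"
      using eps by (intro divide_right_mono) auto
    then have "(g x - c x y) / eps \<le> d / eps + (h x - c x y) / eps"
      by (simp add: add_divide_distrib)
    then show "exp ((g x - c x y) / eps) \<le> exp (d / eps) * exp ((h x - c x y) / eps)"
      by (simp add: exp_add[symmetric])
  qed
  have r2: "Lf h y \<le> exp (d / eps) * Lf g y"
  proof (rule Lf_ratio[OF h g])
    fix x
    have "h x - c x y \<le> d + (g x - c x y)"
      using d[rule_format, of x] by linarith
    then have "(h x - c x y) / eps \<le> (d + (g x - c x y)) / eps"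
      using eps by (intro divide_right_mono) auto
    then have "(h x - c x y) / eps \<le> d / eps + (g x - c x y) / eps"
      by (simp add: add_divide_distrib)
    then show "exp ((h x - c x y) / eps) \<le> exp (d / eps) * exp ((g x - c x y) / eps)"
      by (simp add: exp_add[symmetric])
  qed
  have pg: "Lf g y > 0" and ph: "Lf h y > 0" using Lf_pos g h by auto
  have "ln (Lf g y) \<le> d / eps + ln (Lf h y)"
    using r1 pg ph by (intro ln_bound)
  moreover have "ln (Lf h y) \<le> d / eps + ln (Lf g y)"
    using r2 pg ph by (intro ln_bound)
  ultimately have "\<bar>ln (Lf g y) - ln (Lf h y)\<bar> \<le> d / eps" by auto
  then have "eps * \<bar>ln (Lf g y) - ln (Lf h y)\<bar> \<le> d"
    using eps by (simp add: field_simps)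
  then show ?thesis using eps by (simp add: T_Lf abs_mult right_diff_distrib[symmetric] abs_minus_commute)
qed

lemma T_cont:
  assumes g: "continuous_on UNIV g"
  shows "continuous_on UNIV (T_eps eps c g M)"
  unfolding continuous_on_iff
proof (intro ballI allI impI)
  fix y :: 'a and e :: real assume e: "e > 0"
  obtain r where r: "r > 0" "\<forall>y y'. dist y y' < r \<longrightarrow> (\<forall>x. \<bar>c x y - c x y'\<bar> < e / 2)"
    using cunif[of "e/2"] e by auto
  show "\<exists>d>0. \<forall>y'\<in>UNIV. dist y' y < d \<longrightarrow> dist (T_eps eps c g M y') (T_eps eps c g M y) < e"
  proof (intro exI[of _ r] conjI ballI impI)
    fix y' assume "dist y' y < r"
    then have cl: "\<forall>x. \<bar>c x y' - c x y\<bar> < e / 2" using r by auto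
    have r1: "Lf g y' \<le> exp (e / 2 / eps) * Lf g y"
    proof (rule Lf_ratio[OF g g])
      fix x
      have "g x - c x y' \<le> e / 2 + (g x - c x y)"
        using cl[rule_format, of x] by linarith
      then have "(g x - c x y') / eps \<le> (e / 2 + (g x - c x y)) / eps"
        using eps by (intro divide_right_mono) auto
      then have "(g x - c x y') / eps \<le> e / 2 / eps + (g x - c x y) / eps"
        by (simp add: add_divide_distrib)
      then show "exp ((g x - c x y') / eps) \<le> exp (e / 2 / eps) * exp ((g x - c x y) / eps)"
        by (simp add: exp_add[symmetric])
    qed
    have r2: "Lf g y \<le> exp (e / 2 / eps) * Lf g y'"
    proof (rule Lf_ratio[OF g g])
      fix x
      have "g x - c x y \<le> e / 2 + (g x - c x y')"
        using cl[rule_format, of x] by linarith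
      then have "(g x - c x y) / eps \<le> (e / 2 + (g x - c x y')) / eps"
        using eps by (intro divide_right_mono) auto
      then have "(g x - c x y) / eps \<le> e / 2 / eps + (g x - c x y') / eps"
        by (simp add: add_divide_distrib)
      then show "exp ((g x - c x y) / eps) \<le> exp (e / 2 / eps) * exp ((g x - c x y') / eps)"
        by (simp add: exp_add[symmetric])
    qed
    have pg: "Lf g y > 0" and ph: "Lf g y' > 0" using Lf_pos g by auto
    have "ln (Lf g y') \<le> e / 2 / eps + ln (Lf g y)"
      using r1 pg ph by (intro ln_bound)
    moreover have "ln (Lf g y) \<le> e / 2 / eps + ln (Lf g y')"
      using r2 pg ph by (intro ln_bound)
    ultimately have "\<bar>ln (Lf g y') - ln (Lf g y)\<bar> \<le> e / 2 / eps" by auto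
    then have "eps * \<bar>ln (Lf g y') - ln (Lf g y)\<bar> \<le> e / 2"
      using eps by (simp add: field_simps)
    then have "\<bar>T_eps eps c g M y' - T_eps eps c g M y\<bar> \<le> e / 2"
      using eps by (simp add: T_Lf abs_mult right_diff_distrib[symmetric] abs_minus_commute)
    then show "dist (T_eps eps c g M y') (T_eps eps c g M y) < e"
      using e by (simp add: dist_real_def)
  qed (rule r(1))
qed

end

lemma ln_concave:
  fixes t u v :: real
  assumes "0 \<le> t" "t \<le> 1" "u > 0" "v > 0"
  shows "t * ln u + (1 - t) * ln v \<le> ln (t * u + (1 - t) * v)"
proof -
  have "exp ((1 - t) *\<^sub>R ln v + t *\<^sub>R ln u) \<le> (1 - t) * exp (ln v) + t * exp (ln u)"
    using convex_onD[OF exp_convex, of t "ln v" "ln u"] assms by simp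
  then have "exp (t * ln u + (1 - t) * ln v) \<le> t * u + (1 - t) * v"
    using assms by (simp add: algebra_simps)
  moreover have "t * u + (1 - t) * v > 0"
    using assms by (smt (verit) mult_nonneg_nonneg mult_pos_pos)
  ultimately show ?thesis
    by (metis exp_gt_zero ln_exp ln_le_cancel_iff)
qed

lemma alg1:
  fixes Ay By Ay' By' al mm :: real
  assumes pos: "By > 0" "By' > 0" "mm > 0"
    and h1: "Ay - al * By \<ge> mm * (Ay' - al * By')"
    and h2: "mm * By \<le> By'"
    and h3: "Ay' \<ge> al * By'"
  shows "Ay / By \<ge> mm\<^sup>2 * (Ay' / By') + (1 - mm\<^sup>2) * al"
proof -
  have "Ay' - al * By' = By' * (Ay' / By' - al)" using pos by (simp add: field_simps)
  have r: "Ay' / By' - al \<ge> 0" using h3 pos by (simp add: field_simps)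
  have "mm * (Ay' - al * By') = mm * By' * (Ay' / By' - al)" using pos by (simp add: field_simps)
  also have "\<dots> \<ge> mm * (mm * By) * (Ay' / By' - al)"
    using h2 r pos by (intro mult_right_mono mult_left_mono) auto
  finally have "Ay - al * By \<ge> mm\<^sup>2 * By * (Ay' / By' - al)"
    using h1 by (simp add: power2_eq_square algebra_simps)
  then have "(Ay - al * By) / By \<ge> mm\<^sup>2 * (Ay' / By' - al)"
    using pos by (simp add: field_simps)
  then show ?thesis using pos by (simp add: field_simps)
qed

context sk begin

definition Cm where "Cm = (SOME C. C \<ge> 0 \<and> (\<forall>x y. c x y \<le> C))"
lemma Cm: "Cm \<ge> 0" "c x y \<le> Cm"
  using someI_ex[OF cmax] unfolding Cm_def by auto

definition mm where "mm = exp (- Cm / eps)"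
definition kap where "kap = 1 - mm\<^sup>2"

lemma mm: "mm > 0" "mm \<le> 1"
  using Cm eps by (auto simp: mm_def)

lemma kap: "kap \<ge> 0" "kap < 1"
proof -
  have "mm\<^sup>2 \<le> 1" using mm by (simp add: power_le_one)
  moreover have "mm\<^sup>2 > 0" using mm by simp
  ultimately show "kap \<ge> 0" "kap < 1" by (auto simp: kap_def)
qed

lemma kern_lo: "exp (- c x y / eps) \<ge> mm"
proof -
  have "- Cm / eps \<le> - c x y / eps" using Cm(2)[of x y] eps by (simp add: divide_right_mono)
  then show ?thesis by (simp add: mm_def)
qed

lemma kern_hi: "exp (- c x y / eps) \<le> 1"
  using cnn eps by (simp add: divide_nonneg_pos)

lemma split_exp: "exp ((g x - c x y) / eps) = exp (g x / eps) * exp (- c x y / eps)"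
  by (simp add: exp_add[symmetric] diff_divide_distrib)

lemma contr:
  assumes f: "continuous_on UNIV f" and g: "continuous_on UNIV g" and a: "a \<ge> 0"
    and osc: "\<forall>x x'. (f x - g x) - (f x' - g x') \<le> a"
  shows "(T_eps eps c f M y - T_eps eps c g M y) - (T_eps eps c f M y' - T_eps eps c g M y') \<le> kap * a"
proof -
  define \<phi> where "\<phi> x = f x - g x" for x
  have cphi: "continuous_on UNIV \<phi>" unfolding \<phi>_def using f g by (intro continuous_intros)
  obtain xm where xm: "\<forall>x. \<phi> xm \<le> \<phi> x"
    using continuous_attains_inf[OF cpt _ cphi] by auto
  define lo where "lo = \<phi> xm"
  have phib: "lo \<le> \<phi> x" "\<phi> x \<le> lo + a" for x
    using xm osc[rule_format, of x xm] unfolding lo_def \<phi>_def by auto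
  define al where "al = exp (lo / eps)"
  define be where "be = exp ((lo + a) / eps)"
  have al: "al > 0" by (simp add: al_def)
  have ephi: "al \<le> exp (\<phi> x / eps)" "exp (\<phi> x / eps) \<le> be" for x
    using phib[of x] eps by (auto simp: al_def be_def divide_right_mono)
  have fsplit: "exp ((f x - c x z) / eps) = exp (\<phi> x / eps) * exp ((g x - c x z) / eps)" for x z
    by (simp add: \<phi>_def exp_add[symmetric] add_divide_distrib[symmetric])
  define Ay where "Ay = Lf f y"
  define By where "By = Lf g y"
  define Ay' where "Ay' = Lf f y'"
  define By' where "By' = Lf g y'"
  have pos: "Ay > 0" "By > 0" "Ay' > 0" "By' > 0"
    unfolding Ay_def By_def Ay'_def By'_def using Lf_pos f g by auto
  have h4: "Ay' \<le> be * By'" unfolding Ay'_def By'_def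
    by (rule Lf_ratio[OF f g]) (simp add: fsplit ephi mult_right_mono)
  have h3: "By' \<le> (1 / al) * Ay'" unfolding Ay'_def By'_def
  proof (rule Lf_ratio[OF g f])
    fix x
    have "exp ((g x - c x y') / eps) = (1 / al) * (al * exp ((g x - c x y') / eps))"
      using al by simp
    also have "\<dots> \<le> (1 / al) * (exp (\<phi> x / eps) * exp ((g x - c x y') / eps))"
      using ephi(1)[of x] al by (intro mult_left_mono mult_right_mono) auto
    finally show "exp ((g x - c x y') / eps) \<le> 1 / al * exp ((f x - c x y') / eps)"
      by (simp add: fsplit)
  qed
  have h3': "Ay' \<ge> al * By'" using h3 al by (simp add: field_simps)
  have h2: "By \<le> (1 / mm) * By'" unfolding By_def By'_def
  proof (rule Lf_ratio[OF g g])
    fix x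
    have "exp ((g x - c x y) / eps) \<le> exp (g x / eps) * 1"
      unfolding split_exp by (rule mult_left_mono[OF kern_hi]) simp
    also have "\<dots> \<le> exp (g x / eps) * ((1 / mm) * exp (- c x y' / eps))"
      using kern_lo[of x y'] mm by (intro mult_left_mono) (auto simp: field_simps)
    finally show "exp ((g x - c x y) / eps) \<le> 1 / mm * exp ((g x - c x y') / eps)"
      by (simp add: split_exp)
  qed
  have h2': "mm * By \<le> By'" using h2 mm by (simp add: field_simps)
  define hh where "hh z x = (exp (\<phi> x / eps) - al) * exp ((g x - c x z) / eps)" for z x
  have hh_eq: "hh z x = exp ((f x - c x z) / eps) - al * exp ((g x - c x z) / eps)" for z x
    by (simp add: hh_def fsplit algebra_simps)
  have hh_int: "integral\<^sup>L M (hh z) = Lf f z - al * Lf g z" for z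
  proof -
    have "integral\<^sup>L M (hh z) = (\<integral>x. exp ((f x - c x z) / eps) - al * exp ((g x - c x z) / eps) \<partial>M)"
      by (rule arg_cong[where f="integral\<^sup>L M"], rule ext, rule hh_eq)
    also have "\<dots> = (\<integral>x. exp ((f x - c x z) / eps) \<partial>M) - (\<integral>x. al * exp ((g x - c x z) / eps) \<partial>M)"
      using int_int[OF f, of z] int_int[OF g, of z] by simp
    also have "\<dots> = Lf f z - al * Lf g z"
      unfolding Lf_def by simp
    finally show ?thesis .
  qed
  have hh_cont: "continuous_on UNIV (hh z)" for z
    unfolding hh_def using cphi g eps by (intro continuous_intros c1) auto
  have h1: "integral\<^sup>L M (hh y') \<le> (1 / mm) * integral\<^sup>L M (hh y)"
  proof (rule int_le)
    fix x
    have nn: "exp (\<phi> x / eps) - al \<ge> 0" using ephi(1)[of x] by simp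
    have "mm * exp (- c x y' / eps) \<le> mm * 1"
      using kern_hi[of x y'] mm by (intro mult_left_mono) auto
    also have "\<dots> \<le> exp (- c x y / eps)" using kern_lo[of x y] by simp
    finally have "exp (- c x y' / eps) \<le> (1 / mm) * exp (- c x y / eps)"
      using mm by (simp add: field_simps)
    then have "exp (g x / eps) * exp (- c x y' / eps) \<le> exp (g x / eps) * ((1 / mm) * exp (- c x y / eps))"
      by (intro mult_left_mono) auto
    then have "exp ((g x - c x y') / eps) \<le> (1 / mm) * exp ((g x - c x y) / eps)"
      unfolding split_exp by (simp add: algebra_simps)
    then show "hh y' x \<le> 1 / mm * hh y x"
      unfolding hh_def using nn by (metis mult.left_commute mult_left_mono)
  qed (auto intro: integ hh_cont)
  have h1': "Ay - al * By \<ge> mm * (Ay' - al * By')"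
    using h1 mm unfolding hh_int Ay_def By_def Ay'_def By'_def by (simp add: field_simps)
  have key: "Ay / By \<ge> mm\<^sup>2 * (Ay' / By') + (1 - mm\<^sup>2) * al"
    by (rule alg1[OF pos(2) pos(4) mm(1) h1' h2' h3'])
  have m2: "0 \<le> mm\<^sup>2" "mm\<^sup>2 \<le> 1" using mm by (auto simp: power_le_one)
  have Rp: "Ay' / By' > 0" using pos by simp
  have "mm\<^sup>2 * ln (Ay' / By') + (1 - mm\<^sup>2) * ln al \<le> ln (mm\<^sup>2 * (Ay' / By') + (1 - mm\<^sup>2) * al)"
    by (rule ln_concave[OF m2 Rp al])
  also have "\<dots> \<le> ln (Ay / By)"
  proof -
    have "mm\<^sup>2 * (Ay' / By') > 0" using mm Rp by (intro mult_pos_pos) auto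
    moreover have "(1 - mm\<^sup>2) * al \<ge> 0" using m2 al by simp
    ultimately have p: "mm\<^sup>2 * (Ay' / By') + (1 - mm\<^sup>2) * al > 0" by linarith
    then have "Ay / By > 0" using key by linarith
    then show ?thesis using p key by (subst ln_le_cancel_iff) auto
  qed
  finally have c1: "mm\<^sup>2 * ln (Ay' / By') + (1 - mm\<^sup>2) * ln al \<le> ln (Ay / By)" .
  have "Ay' / By' \<le> be" using h4 pos by (simp add: field_simps)
  then have "ln (Ay' / By') \<le> ln be" using Rp by (subst ln_le_cancel_iff) (auto simp: be_def)
  then have c2: "ln (Ay' / By') \<le> (lo + a) / eps" by (simp add: be_def)
  have c3: "ln al = lo / eps" by (simp add: al_def)
  have "ln (Ay' / By') - ln (Ay / By) \<le> (1 - mm\<^sup>2) * (ln (Ay' / By') - ln al)"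
    using c1 by (simp add: algebra_simps)
  also have "\<dots> \<le> (1 - mm\<^sup>2) * (a / eps)"
    using c2 c3 m2 by (intro mult_left_mono) (auto simp: diff_divide_distrib[symmetric] add_divide_distrib)
  finally have c4: "eps * (ln (Ay' / By') - ln (Ay / By)) \<le> kap * a"
    using eps unfolding kap_def by (simp add: field_simps)
  have "(T_eps eps c f M y - T_eps eps c g M y) - (T_eps eps c f M y' - T_eps eps c g M y')
      = eps * (ln (Ay' / By') - ln (Ay / By))"
    using pos unfolding T_Lf Ay_def By_def Ay'_def By'_def by (simp add: ln_div algebra_simps)
  then show ?thesis using c4 by simp
qed

end

context sk begin

definition x0 :: 'a where "x0 = undefined"
definition NN where "NN g = (\<lambda>y. T_eps eps c g M y - T_eps eps c g M x0)"
definition FF where "FF n = (NN ^^ n) (\<lambda>_. 0)"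

lemma FF_Suc: "FF (Suc n) = NN (FF n)" by (simp add: FF_def)

lemma NN_cont: "continuous_on UNIV g \<Longrightarrow> continuous_on UNIV (NN g)"
  unfolding NN_def by (intro continuous_intros T_cont)

lemma FF_cont: "continuous_on UNIV (FF n)"
  by (induction n) (auto simp: FF_Suc NN_cont, simp add: FF_def)

lemma FF_x0: "FF n x0 = 0"
  by (cases n) (auto simp: FF_Suc NN_def FF_def)

lemma NN_contr:
  assumes "continuous_on UNIV f" "continuous_on UNIV g" "a \<ge> 0"
    "\<forall>x x'. (f x - g x) - (f x' - g x') \<le> a"
  shows "\<forall>y y'. (NN f y - NN g y) - (NN f y' - NN g y') \<le> kap * a"
  using contr[OF assms] unfolding NN_def by (auto simp: algebra_simps)

definition DD where "DD = (SOME B. \<forall>x. \<bar>FF 1 x\<bar> \<le> B)"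
lemma DD: "\<bar>FF 1 x\<bar> \<le> DD"
  using someI_ex[OF cbound[OF FF_cont[of 1]]] unfolding DD_def by blast
lemma DD_nn: "DD \<ge> 0" using DD[of x0] by simp

lemma FF_osc: "\<forall>x x'. (FF (Suc n) x - FF n x) - (FF (Suc n) x' - FF n x') \<le> kap ^ n * (2 * DD)"
proof (induction n)
  case 0
  then show ?case using DD by (auto simp: FF_def abs_le_iff) (smt (verit) DD)
next
  case (Suc n)
  have "\<forall>y y'. (NN (FF (Suc n)) y - NN (FF n) y) - (NN (FF (Suc n)) y' - NN (FF n) y') \<le> kap * (kap ^ n * (2 * DD))"
    by (rule NN_contr[OF FF_cont FF_cont _ Suc]) (use kap DD_nn in auto)
  then show ?case by (simp add: FF_Suc[of "Suc n"] FF_Suc[of n] mult.assoc)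
qed

lemma FF_step: "\<bar>FF (Suc n) x - FF n x\<bar> \<le> kap ^ n * (2 * DD)"
  using FF_osc[of n, rule_format, of x x0] FF_osc[of n, rule_format, of x0 x] FF_x0[of n] FF_x0[of "Suc n"]
  by (simp add: abs_le_iff)

definition EE where "EE n = kap ^ n * (2 * DD) / (1 - kap)"

lemma FF_tele: "m \<ge> n \<Longrightarrow> \<bar>FF m x - FF n x\<bar> \<le> (kap ^ n - kap ^ m) * (2 * DD) / (1 - kap)"
proof (induction m rule: dec_induct)
  case base
  then show ?case by simp
next
  case (step m)
  have "\<bar>FF (Suc m) x - FF n x\<bar> \<le> \<bar>FF (Suc m) x - FF m x\<bar> + \<bar>FF m x - FF n x\<bar>" by linarith
  also have "\<dots> \<le> kap ^ m * (2 * DD) + (kap ^ n - kap ^ m) * (2 * DD) / (1 - kap)"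
    using FF_step[of m x] step.IH by linarith
  also have "\<dots> = (kap ^ n - kap ^ Suc m) * (2 * DD) / (1 - kap)"
    using kap by (simp add: field_simps)
  finally show ?case .
qed

lemma EE_nn: "EE n \<ge> 0" using kap DD_nn by (simp add: EE_def)

lemma FF_tele': "m \<ge> n \<Longrightarrow> \<bar>FF m x - FF n x\<bar> \<le> EE n"
proof -
  assume "m \<ge> n"
  then have "\<bar>FF m x - FF n x\<bar> \<le> (kap ^ n - kap ^ m) * (2 * DD) / (1 - kap)" by (rule FF_tele)
  also have "\<dots> \<le> kap ^ n * (2 * DD) / (1 - kap)"
    using kap DD_nn by (intro divide_right_mono mult_right_mono) auto
  finally show ?thesis by (simp add: EE_def)
qed

lemma EE_lim: "EE \<longlonglongrightarrow> 0"
proof -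
  have "(\<lambda>n. kap ^ n * (2 * DD / (1 - kap))) \<longlonglongrightarrow> 0 * (2 * DD / (1 - kap))"
    using kap by (intro tendsto_mult LIMSEQ_power_zero tendsto_const) auto
  then show ?thesis by (simp add: EE_def[abs_def])
qed

lemma EE_mono: "n \<le> m \<Longrightarrow> EE m \<le> EE n"
  using kap DD_nn unfolding EE_def
  by (intro divide_right_mono mult_right_mono power_decreasing) auto

lemma FF_Cauchy: "Cauchy (\<lambda>n. FF n x)"
proof (rule CauchyI)
  fix e :: real assume e: "e > 0"
  obtain N where N: "\<forall>n\<ge>N. EE n < e"
    using EE_lim e unfolding lim_sequentially by (auto simp: dist_real_def) (metis EE_nn abs_of_nonneg)
  show "\<exists>N. \<forall>m\<ge>N. \<forall>n\<ge>N. norm (FF m x - FF n x) < e"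
  proof (intro exI[of _ N] allI impI)
    fix m n assume mn: "m \<ge> N" "n \<ge> N"
    show "norm (FF m x - FF n x) < e"
    proof (cases "m \<ge> n")
      case True
      then show ?thesis using FF_tele'[OF True, of x] N mn by force
    next
      case False
      then have "n \<ge> m" by simp
      then show ?thesis using FF_tele'[OF \<open>n \<ge> m\<close>, of x] N mn by (force simp: abs_minus_commute)
    qed
  qed
qed

definition GG where "GG x = lim (\<lambda>n. FF n x)"

lemma GG_lim: "(\<lambda>n. FF n x) \<longlonglongrightarrow> GG x"
  unfolding GG_def using FF_Cauchy[of x] by (simp add: Cauchy_convergent_iff convergent_LIMSEQ_iff)

lemma GG_close: "\<bar>GG x - FF n x\<bar> \<le> EE n"
proof -
  have "(\<lambda>m. \<bar>FF m x - FF n x\<bar>) \<longlonglongrightarrow> \<bar>GG x - FF n x\<bar>"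
    by (intro tendsto_intros GG_lim)
  then show ?thesis
    by (rule LIMSEQ_le_const2) (use FF_tele' in blast)
qed

lemma GG_cont: "continuous_on UNIV GG"
proof (rule uniform_limit_theorem[where F=sequentially and f=FF])
  show "\<forall>\<^sub>F n in sequentially. continuous_on UNIV (FF n)" by (simp add: FF_cont)
  show "uniform_limit UNIV FF GG sequentially"
    unfolding uniform_limit_iff
  proof (intro allI impI)
    fix e :: real assume e: "e > 0"
    obtain N where N: "\<forall>n\<ge>N. EE n < e"
      using EE_lim e unfolding lim_sequentially by (auto simp: dist_real_def) (metis EE_nn abs_of_nonneg)
    show "\<forall>\<^sub>F n in sequentially. \<forall>x\<in>UNIV. dist (FF n x) (GG x) < e"
      unfolding eventually_sequentially
    proof (intro exI[of _ N] allI impI ballI)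
      fix n x assume "n \<ge> N"
      then show "dist (FF n x) (GG x) < e"
        using N[rule_format, of n] GG_close[of x n] by (simp add: dist_real_def abs_minus_commute)
    qed
  qed
qed simp

lemma GG_x0: "GG x0 = 0"
  using GG_lim[of x0] by (simp add: FF_x0 LIMSEQ_const_iff)

lemma GG_fix: "NN GG = GG"
proof
  fix y
  have l1: "(\<lambda>n. NN (FF n) y) \<longlonglongrightarrow> GG y"
    using LIMSEQ_Suc[OF GG_lim[of y]] by (simp add: FF_Suc)
  have bnd: "\<bar>NN (FF n) y - NN GG y\<bar> \<le> 2 * EE n" for n
  proof -
    have "\<forall>x. \<bar>FF n x - GG x\<bar> \<le> EE n" using GG_close by (simp add: abs_minus_commute)
    then have "\<bar>T_eps eps c (FF n) M z - T_eps eps c GG M z\<bar> \<le> EE n" for z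
      by (rule T_nonexp[OF FF_cont GG_cont])
    from this[of y] this[of x0] show ?thesis unfolding NN_def by linarith
  qed
  have "(\<lambda>n. NN (FF n) y - NN GG y) \<longlonglongrightarrow> 0"
  proof (rule Lim_null_comparison)
    show "\<forall>\<^sub>F n in sequentially. norm (NN (FF n) y - NN GG y) \<le> 2 * EE n"
      using bnd by simp
    show "(\<lambda>n. 2 * EE n) \<longlonglongrightarrow> 0" using tendsto_mult[OF tendsto_const EE_lim, of 2] by simp
  qed
  then have l2: "(\<lambda>n. NN (FF n) y) \<longlonglongrightarrow> NN GG y"
    by (simp add: LIM_zero_iff)
  show "NN GG y = GG y" using LIMSEQ_unique[OF l2 l1] .
qed

lemma schr_exists: "\<exists>f. continuous_on UNIV f \<and> f = T_eps eps c f M"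
proof -
  define b where "b = T_eps eps c GG M x0"
  define f where "f x = GG x + b / 2" for x
  have "T_eps eps c GG M y = GG y + b" for y
    using fun_cong[OF GG_fix, of y] unfolding NN_def b_def by simp
  then have "T_eps eps c f M y = f y" for y
    unfolding f_def by (simp add: T_shift[OF GG_cont])
  moreover have "continuous_on UNIV f" unfolding f_def by (intro continuous_intros GG_cont)
  ultimately show ?thesis by (intro exI[of _ f]) auto
qed

lemma schr_unique:
  assumes f: "continuous_on UNIV f" "f = T_eps eps c f M"
    and g: "continuous_on UNIV g" "g = T_eps eps c g M"
  shows "f = g"
proof -
  define \<phi> where "\<phi> x = f x - g x" for x
  have cphi: "continuous_on UNIV \<phi>" unfolding \<phi>_def using f g by (intro continuous_intros)
  obtain xM where xM: "\<forall>x. \<phi> x \<le> \<phi> xM" using continuous_attains_sup[OF cpt _ cphi] by auto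
  obtain xm where xm: "\<forall>x. \<phi> xm \<le> \<phi> x" using continuous_attains_inf[OF cpt _ cphi] by auto
  define a where "a = \<phi> xM - \<phi> xm"
  have a: "a \<ge> 0" using xm a_def by auto
  have osc: "\<forall>x x'. (f x - g x) - (f x' - g x') \<le> a"
    using xM xm unfolding a_def \<phi>_def by (smt (verit))
  have "(T_eps eps c f M xM - T_eps eps c g M xM) - (T_eps eps c f M xm - T_eps eps c g M xm) \<le> kap * a"
    by (rule contr[OF f(1) g(1) a osc])
  moreover have "T_eps eps c f M z = f z" "T_eps eps c g M z = g z" for z
    using fun_cong[OF f(2), of z] fun_cong[OF g(2), of z] by auto
  ultimately have "a \<le> kap * a" unfolding a_def \<phi>_def by simp
  then have "(1 - kap) * a \<le> 0" by (simp add: algebra_simps)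
  moreover have "1 - kap > 0" using kap by simp
  ultimately have "a \<le> 0" by (simp add: mult_le_0_iff)
  then have "a = 0" using a by simp
  then have const: "\<phi> x = \<phi> x0" for x using xM[rule_format, of x] xm[rule_format, of x] xM[rule_format, of x0] xm[rule_format, of x0] a_def by linarith
  define s where "s = \<phi> x0"
  have fg: "f = (\<lambda>x. g x + s)" using const unfolding s_def \<phi>_def by (auto simp: algebra_simps)
  have "f x0 = T_eps eps c f M x0" using fun_cong[OF f(2), of x0] .
  also have "\<dots> = T_eps eps c (\<lambda>x. g x + s) M x0" using fg by simp
  also have "\<dots> = T_eps eps c g M x0 - s" by (rule T_shift[OF g(1)])
  also have "\<dots> = g x0 - s" using fun_cong[OF g(2), of x0] by simp
  finally have "s = 0" using fun_cong[OF fg, of x0] by simp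
  then show ?thesis using fg by simp
qed

lemma schr_pot: "continuous_on UNIV (schr_pot eps c M)" "schr_pot eps c M = T_eps eps c (schr_pot eps c M) M"
proof -
  have "\<exists>!f. continuous_on UNIV f \<and> f = T_eps eps c f M"
    using schr_exists schr_unique by blast
  from theI'[OF this] show "continuous_on UNIV (schr_pot eps c M)" "schr_pot eps c M = T_eps eps c (schr_pot eps c M) M"
    unfolding schr_pot_def by auto
qed

end

context sk begin

lemma int_close:
  assumes "integrable M (f::'a \<Rightarrow> real)" "integrable M g" "\<And>y. \<bar>f y - g y\<bar> \<le> K"
  shows "\<bar>integral\<^sup>L M f - integral\<^sup>L M g\<bar> \<le> K"
proof -
  have i1: "integral\<^sup>L M f - integral\<^sup>L M g = (\<integral>y. f y - g y \<partial>M)"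
    using assms by simp
  have "(\<integral>y. f y - g y \<partial>M) \<le> (\<integral>y. K \<partial>M)"
    using assms(3) by (intro integral_mono) (auto intro: assms integ continuous_on_const simp: abs_le_iff)
  moreover have "(\<integral>y. g y - f y \<partial>M) \<le> (\<integral>y. K \<partial>M)"
    using assms(3) by (intro integral_mono) (auto intro: assms integ continuous_on_const simp: abs_le_iff)
  moreover have "(\<integral>y. g y - f y \<partial>M) = - (\<integral>y. f y - g y \<partial>M)"
    using assms by simp
  moreover have "(\<integral>y. K \<partial>M) = K" using prob_space.prob_space[OF ps] by simp
  ultimately show ?thesis using i1 by linarith
qed

lemma sec_cont:
  assumes H: "continuous_on UNIV (\<lambda>(x, y). H x y)"
  shows "continuous_on UNIV (\<lambda>y. H x y)" "continuous_on UNIV (\<lambda>x. H x y)"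
proof -
  have "continuous_on UNIV ((\<lambda>(x, y). H x y) \<circ> (\<lambda>y. (x, y)))"
    by (rule continuous_on_compose) (auto intro!: continuous_intros H[THEN continuous_on_subset])
  then show "continuous_on UNIV (\<lambda>y. H x y)" by (simp add: o_def)
  have "continuous_on UNIV ((\<lambda>(x, y). H x y) \<circ> (\<lambda>x. (x, y)))"
    by (rule continuous_on_compose) (auto intro!: continuous_intros H[THEN continuous_on_subset])
  then show "continuous_on UNIV (\<lambda>x. H x y)" by (simp add: o_def)
qed

lemma param_cont:
  fixes H :: "'a \<Rightarrow> 'a \<Rightarrow> real"
  assumes H: "continuous_on UNIV (\<lambda>(x, y). H x y)" and u: "continuous_on UNIV (u::'a \<Rightarrow> real)"
  shows "continuous_on UNIV (\<lambda>x. \<integral>y. H x y * u y \<partial>M)"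
  unfolding continuous_on_iff
proof (intro ballI allI impI)
  fix x :: 'a and e :: real assume e: "e > 0"
  obtain B where B: "\<forall>y. \<bar>u y\<bar> \<le> B" using cbound[OF u] by blast
  have B0: "B \<ge> 0" using B abs_ge_zero order_trans by metis
  define d where "d = e / (2 * (B + 1))"
  have d: "d > 0" using e B0 by (simp add: d_def)
  have "uniformly_continuous_on (UNIV \<times> UNIV) (\<lambda>(x, y). H x y)"
    using cpt2 H by (intro compact_uniformly_continuous) auto
  then obtain r where r: "r > 0" and
    h: "\<forall>p\<in>UNIV \<times> UNIV. \<forall>q\<in>UNIV \<times> UNIV. dist q p < r \<longrightarrow> dist ((\<lambda>(x, y). H x y) q) ((\<lambda>(x, y). H x y) p) < d"
    using d unfolding uniformly_continuous_on_def by metis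
  show "\<exists>r>0. \<forall>x'\<in>UNIV. dist x' x < r \<longrightarrow> dist (\<integral>y. H x' y * u y \<partial>M) (\<integral>y. H x y * u y \<partial>M) < e"
  proof (intro exI[of _ r] conjI ballI impI)
    fix x' assume dx: "dist x' x < r"
    have pt: "\<bar>H x' y * u y - H x y * u y\<bar> \<le> d * B" for y
    proof -
      have "dist (x', y) (x, y) < r" using dx by (simp add: dist_Pair_Pair)
      then have "dist (H x' y) (H x y) < d" using h by fastforce
      then have "\<bar>H x' y - H x y\<bar> \<le> d" by (simp add: dist_real_def)
      then have "\<bar>H x' y - H x y\<bar> * \<bar>u y\<bar> \<le> d * B"
        using B d by (intro mult_mono) auto
      then show ?thesis by (simp add: abs_mult[symmetric] left_diff_distrib)
    qed
    have "\<bar>(\<integral>y. H x' y * u y \<partial>M) - (\<integral>y. H x y * u y \<partial>M)\<bar> \<le> d * B"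
      by (rule int_close[OF _ _ pt]) (auto intro!: integ continuous_intros sec_cont[OF H] u)
    also have "d * B < e"
    proof -
      have "d * B \<le> d * (B + 1)" using d by simp
      also have "\<dots> = e / 2" using B0 by (simp add: d_def field_simps)
      finally show ?thesis using e by simp
    qed
    finally show "dist (\<integral>y. H x' y * u y \<partial>M) (\<integral>y. H x y * u y \<partial>M) < e"
      by (simp add: dist_real_def)
  qed (rule r)
qed

abbreviation "fp \<equiv> schr_pot eps c M"

lemma kmu_pos: "kmu eps c M x y > 0" by (simp add: kmu_def)

lemma kmu_jcont: "continuous_on UNIV (\<lambda>(x, y). kmu eps c M x y)"
proof -
  have e: "(\<lambda>(x, y). kmu eps c M x y) = (\<lambda>p. exp ((fp (fst p) + fp (snd p) - (\<lambda>(x, y). c x y) p) / eps))"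
    by (auto simp: kmu_def fun_eq_iff)
  have f1: "continuous_on UNIV (\<lambda>p::'a\<times>'a. fp (fst p))"
    by (rule continuous_on_compose2[OF schr_pot(1) continuous_on_fst]) (auto intro: continuous_on_id)
  have f2: "continuous_on UNIV (\<lambda>p::'a\<times>'a. fp (snd p))"
    by (rule continuous_on_compose2[OF schr_pot(1) continuous_on_snd]) (auto intro: continuous_on_id)
  show ?thesis unfolding e using eps by (intro continuous_intros f1 f2 ccont) auto
qed

lemma kmu_cont: "continuous_on UNIV (\<lambda>y. kmu eps c M x y)" "continuous_on UNIV (\<lambda>x. kmu eps c M x y)"
  using sec_cont[OF kmu_jcont] by auto

lemma kmu_sum1: "(\<integral>y. kmu eps c M x y \<partial>M) = 1"
proof -
  have "kmu eps c M x y = exp (fp x / eps) * exp ((fp y - c y x) / eps)" for y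
    using csym by (simp add: kmu_def exp_add[symmetric] add_divide_distrib[symmetric] diff_divide_distrib[symmetric] algebra_simps)
  then have "(\<integral>y. kmu eps c M x y \<partial>M) = exp (fp x / eps) * Lf fp x"
    by (simp add: Lf_def)
  moreover have "fp x = - eps * ln (Lf fp x)"
    using fun_cong[OF schr_pot(2), of x] by (simp add: T_Lf)
  then have "ln (Lf fp x) = - fp x / eps" using eps by (simp add: field_simps)
  then have "Lf fp x = exp (- fp x / eps)"
    using Lf_pos[OF schr_pot(1), of x] by (metis exp_ln)
  ultimately show ?thesis by (simp add: exp_add[symmetric])
qed

lemma kmu_int: "integrable M (kmu eps c M x)"
  using integ[OF kmu_cont(1)[of x]] by simp

lemma Kop_cont: "continuous_on UNIV u \<Longrightarrow> continuous_on UNIV (Kop eps c M u)"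
proof -
  assume u: "continuous_on UNIV u"
  have "Kop eps c M u = (\<lambda>x. \<integral>y. kmu eps c M x y * u y \<partial>M)" by (simp add: Kop_def[abs_def])
  then show ?thesis using param_cont[OF kmu_jcont u] by simp
qed

lemma Kop_integ: "continuous_on UNIV u \<Longrightarrow> integrable M (\<lambda>y. kmu eps c M x y * u y)"
  by (intro integ continuous_intros kmu_cont)

lemma Kop_diff: "continuous_on UNIV u \<Longrightarrow> continuous_on UNIV v \<Longrightarrow>
   Kop eps c M u x - Kop eps c M v x = Kop eps c M (\<lambda>y. u y - v y) x"
  using Kop_integ[of u x] Kop_integ[of v x]
  by (simp add: Kop_def right_diff_distrib)

lemma Kop_le: "continuous_on UNIV u \<Longrightarrow> (\<And>y. u y \<le> B) \<Longrightarrow> Kop eps c M u x \<le> B"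
proof -
  assume u: "continuous_on UNIV u" and b: "\<And>y. u y \<le> B"
  have "Kop eps c M u x \<le> (\<integral>y. kmu eps c M x y * B \<partial>M)"
    unfolding Kop_def
    by (rule integral_mono) (auto intro!: Kop_integ u continuous_intros mult_left_mono b less_imp_le[OF kmu_pos] simp: kmu_int)
  also have "\<dots> = B" using kmu_sum1[of x] kmu_int[of x] by simp
  finally show ?thesis .
qed

lemma Kop_ge: "continuous_on UNIV u \<Longrightarrow> (\<And>y. B \<le> u y) \<Longrightarrow> B \<le> Kop eps c M u x"
proof -
  assume u: "continuous_on UNIV u" and b: "\<And>y. B \<le> u y"
  have "(\<integral>y. kmu eps c M x y * B \<partial>M) \<le> Kop eps c M u x"
    unfolding Kop_def
    by (rule integral_mono) (auto intro!: Kop_integ u continuous_intros mult_left_mono b less_imp_le[OF kmu_pos] simp: kmu_int)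
  moreover have "(\<integral>y. kmu eps c M x y * B \<partial>M) = B" using kmu_sum1[of x] kmu_int[of x] by simp
  ultimately show ?thesis by linarith
qed

lemma max_principle:
  assumes d: "continuous_on UNIV d" and eq: "\<forall>x. d x - Kop eps c M (Kop eps c M d) x = c0"
  shows "\<forall>x. d x = d x0"
proof -
  define w where "w = Kop eps c M d"
  have w: "continuous_on UNIV w" unfolding w_def by (rule Kop_cont[OF d])
  obtain x1 where x1: "\<forall>x. d x \<le> d x1" using continuous_attains_sup[OF cpt _ d] by auto
  obtain x2 where x2: "\<forall>x. d x2 \<le> d x" using continuous_attains_inf[OF cpt _ d] by auto
  have wle: "w y \<le> d x1" for y unfolding w_def using x1 by (intro Kop_le d) auto
  have wge: "d x2 \<le> w y" for y unfolding w_def using x2 by (intro Kop_ge d) auto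
  have "Kop eps c M w x1 \<le> d x1" by (rule Kop_le[OF w wle])
  moreover have "d x2 \<le> Kop eps c M w x2" by (rule Kop_ge[OF w wge])
  ultimately have "c0 \<ge> 0" "c0 \<le> 0" using eq[rule_format, of x1] eq[rule_format, of x2] unfolding w_def by auto
  then have eq0: "d x = Kop eps c M w x" for x using eq[rule_format, of x] unfolding w_def by simp
  define Mx where "Mx = d x1"
  have i0: "(\<integral>y. kmu eps c M x1 y * (Mx - w y) \<partial>M) = 0"
  proof -
    have "(\<integral>y. kmu eps c M x1 y * (Mx - w y) \<partial>M) = (\<integral>y. kmu eps c M x1 y * Mx \<partial>M) - Kop eps c M w x1"
      unfolding Kop_def using Kop_integ[OF w, of x1] Kop_integ[of "\<lambda>_. Mx" x1]
      by (simp add: right_diff_distrib)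
    also have "\<dots> = Mx - d x1" using kmu_sum1 eq0[of x1] integ[OF kmu_cont(1)] by simp
    finally show ?thesis by (simp add: Mx_def)
  qed
  have int: "integrable M (\<lambda>y. kmu eps c M x1 y * (Mx - w y))"
    by (rule Kop_integ) (intro continuous_intros w)
  have nn: "AE y in M. 0 \<le> kmu eps c M x1 y * (Mx - w y)"
    by (intro AE_I2 mult_nonneg_nonneg less_imp_le[OF kmu_pos]) (use wle in \<open>auto simp: Mx_def\<close>)
  have "AE y in M. kmu eps c M x1 y * (Mx - w y) = 0"
    using integral_nonneg_eq_0_iff_AE[OF int nn] i0 by simp
  then have ae: "AE y in M. w y = Mx"
  proof (rule AE_mp, intro AE_I2 impI)
    fix y assume "kmu eps c M x1 y * (Mx - w y) = 0"
    then show "w y = Mx" using kmu_pos[of x1 y] by simp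
  qed
  have "d x = Mx" for x
  proof -
    have "d x = (\<integral>y. kmu eps c M x y * w y \<partial>M)" using eq0[of x] by (simp add: Kop_def)
    also have "\<dots> = (\<integral>y. kmu eps c M x y * Mx \<partial>M)"
      by (rule integral_cong_AE) (auto intro!: meas continuous_intros kmu_cont w intro: AE_mp[OF ae])
    also have "\<dots> = Mx" using kmu_sum1[of x] kmu_int[of x] by simp
    finally show ?thesis .
  qed
  then show ?thesis by simp
qed

end

definition QS :: "'a set \<Rightarrow> ('a \<Rightarrow> 'a \<Rightarrow> real) \<Rightarrow> ('a \<Rightarrow> real) \<Rightarrow> real" where
  "QS S k a = (\<Sum>y\<in>S. \<Sum>z\<in>S. a y * a z * k y z)"

lemma pre_sq_S:
  assumes "finite S" "fsupp a \<subseteq> S"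
  shows "pre_sq k a = QS S k a"
proof -
  have fin: "finite (fsupp a)" using assms finite_subset by blast
  have z: "a y = 0" if "y \<in> S - fsupp a" for y using that by (simp add: fsupp_def)
  have "pre_sq k a = (\<Sum>y\<in>fsupp a. \<Sum>z\<in>S. a y * a z * k y z)"
    unfolding pre_sq_def
    by (intro sum.cong refl sum.mono_neutral_left assms) (auto simp: z)
  also have "\<dots> = QS S k a"
    unfolding QS_def by (intro sum.mono_neutral_left assms) (auto simp: z)
  finally show ?thesis .
qed

lemma pre_fun_S:
  assumes "finite S" "fsupp a \<subseteq> S"
  shows "pre_fun k a x = (\<Sum>y\<in>S. a y * k y x)"
  unfolding pre_fun_def
  by (intro sum.mono_neutral_left assms) (auto simp: fsupp_def)

lemma QS_par: "QS S k (\<lambda>y. a y + b y) + QS S k (\<lambda>y. a y - b y) = 2 * QS S k a + 2 * QS S k b"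
proof -
  have "QS S k (\<lambda>y. a y + b y) + QS S k (\<lambda>y. a y - b y) =
     (\<Sum>y\<in>S. \<Sum>z\<in>S. (a y + b y) * (a z + b z) * k y z + (a y - b y) * (a z - b z) * k y z)"
    unfolding QS_def by (simp add: sum.distrib)
  also have "\<dots> = (\<Sum>y\<in>S. \<Sum>z\<in>S. 2 * (a y * a z * k y z) + 2 * (b y * b z * k y z))"
    by (intro sum.cong refl) (simp add: algebra_simps)
  also have "\<dots> = 2 * QS S k a + 2 * QS S k b"
    unfolding QS_def by (simp add: sum.distrib sum_distrib_left)
  finally show ?thesis .
qed

lemma QS_scale: "QS S k (\<lambda>y. r * a y) = r\<^sup>2 * QS S k a"
  unfolding QS_def by (simp add: sum_distrib_left power2_eq_square algebra_simps)

definition psdk :: "('a \<Rightarrow> 'a \<Rightarrow> real) \<Rightarrow> bool" where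
  "psdk k \<longleftrightarrow> (\<forall>a. finite (fsupp a) \<longrightarrow> pre_sq k a \<ge> 0)"

lemma fsupp_add: "fsupp (\<lambda>y. a y + b y) \<subseteq> fsupp a \<union> fsupp b" by (auto simp: fsupp_def)
lemma fsupp_diff: "fsupp (\<lambda>y. a y - b y) \<subseteq> fsupp a \<union> fsupp b" by (auto simp: fsupp_def)
lemma fsupp_scale: "fsupp (\<lambda>y. r * a y) \<subseteq> fsupp a" by (auto simp: fsupp_def)

lemma fin_add: "finite (fsupp a) \<Longrightarrow> finite (fsupp b) \<Longrightarrow> finite (fsupp (\<lambda>y. a y + b y))"
  by (rule finite_subset[OF fsupp_add]) simp
lemma fin_diff: "finite (fsupp a) \<Longrightarrow> finite (fsupp b) \<Longrightarrow> finite (fsupp (\<lambda>y. a y - b y))"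
  by (rule finite_subset[OF fsupp_diff]) simp
lemma fin_scale: "finite (fsupp a) \<Longrightarrow> finite (fsupp (\<lambda>y. r * a y))"
  by (rule finite_subset[OF fsupp_scale])

lemma pre_sq_add_le:
  assumes k: "psdk k" and fa: "finite (fsupp a)" and fb: "finite (fsupp b)"
  shows "pre_sq k (\<lambda>y. a y + b y) \<le> 2 * pre_sq k a + 2 * pre_sq k b"
proof -
  define S where "S = fsupp a \<union> fsupp b"
  have S: "finite S" using fa fb by (simp add: S_def)
  have "pre_sq k (\<lambda>y. a y - b y) \<ge> 0"
    using k fsupp_diff[of a b] S finite_subset unfolding psdk_def S_def by blast
  moreover have "pre_sq k (\<lambda>y. a y - b y) = QS S k (\<lambda>y. a y - b y)"
    using fsupp_diff[of a b] by (intro pre_sq_S S) (simp add: S_def)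
  moreover have "pre_sq k (\<lambda>y. a y + b y) = QS S k (\<lambda>y. a y + b y)"
    using fsupp_add[of a b] by (intro pre_sq_S S) (simp add: S_def)
  moreover have "pre_sq k a = QS S k a" by (intro pre_sq_S S) (simp add: S_def)
  moreover have "pre_sq k b = QS S k b" by (intro pre_sq_S S) (simp add: S_def)
  ultimately show ?thesis using QS_par[of S k a b] by linarith
qed

lemma pre_sq_scale:
  assumes fa: "finite (fsupp a)"
  shows "pre_sq k (\<lambda>y. r * a y) = r\<^sup>2 * pre_sq k a"
proof -
  have "pre_sq k (\<lambda>y. r * a y) = QS (fsupp a) k (\<lambda>y. r * a y)"
    by (intro pre_sq_S fa fsupp_scale)
  also have "\<dots> = r\<^sup>2 * QS (fsupp a) k a" by (rule QS_scale)
  also have "\<dots> = r\<^sup>2 * pre_sq k a" using pre_sq_S[OF fa order_refl] by simp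
  finally show ?thesis .
qed

lemma rkhs_add:
  assumes k: "psdk k" and f: "f \<in> rkhs k" and g: "g \<in> rkhs k"
  shows "(\<lambda>x. f x + g x) \<in> rkhs k"
proof -
  obtain A where A: "rkhs_approx k f A" using f by (auto simp: rkhs_def)
  obtain B where B: "rkhs_approx k g B" using g by (auto simp: rkhs_def)
  define C where "C n = (\<lambda>y. A n y + B n y)" for n
  have fA: "finite (fsupp (A n))" and fB: "finite (fsupp (B n))" for n
    using A B by (auto simp: rkhs_approx_def)
  have fC: "finite (fsupp (C n))" for n
    unfolding C_def by (intro fin_add fA fB)
  have pf: "pre_fun k (C n) x = pre_fun k (A n) x + pre_fun k (B n) x" for n x
  proof -
    define S where "S = fsupp (A n) \<union> fsupp (B n)"
    have S: "finite S" using fA fB by (simp add: S_def)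
    have "pre_fun k (C n) x = (\<Sum>y\<in>S. C n y * k y x)"
      by (intro pre_fun_S S) (auto simp: S_def C_def fsupp_def)
    also have "\<dots> = (\<Sum>y\<in>S. A n y * k y x) + (\<Sum>y\<in>S. B n y * k y x)"
      by (simp add: C_def sum.distrib distrib_right)
    also have "\<dots> = pre_fun k (A n) x + pre_fun k (B n) x"
      by (simp add: pre_fun_S[OF S] S_def)
    finally show ?thesis .
  qed
  have "rkhs_approx k (\<lambda>x. f x + g x) C"
    unfolding rkhs_approx_def
  proof (intro conjI allI impI)
    show "finite (fsupp (C n))" for n by (rule fC)
    fix x
    show "(\<lambda>n. pre_fun k (C n) x) \<longlonglongrightarrow> f x + g x"
      unfolding pf using A B by (intro tendsto_add) (auto simp: rkhs_approx_def)
  next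
    fix e :: real assume e: "e > 0"
    obtain N1 where N1: "\<forall>m\<ge>N1. \<forall>n\<ge>N1. pre_sq k (\<lambda>y. A m y - A n y) < e / 4"
      using A e unfolding rkhs_approx_def by (meson divide_pos_pos zero_less_numeral)
    obtain N2 where N2: "\<forall>m\<ge>N2. \<forall>n\<ge>N2. pre_sq k (\<lambda>y. B m y - B n y) < e / 4"
      using B e unfolding rkhs_approx_def by (meson divide_pos_pos zero_less_numeral)
    show "\<exists>N. \<forall>m\<ge>N. \<forall>n\<ge>N. pre_sq k (\<lambda>y. C m y - C n y) < e"
    proof (intro exI[of _ "max N1 N2"] allI impI)
      fix m n assume mn: "m \<ge> max N1 N2" "n \<ge> max N1 N2"
      have eq: "(\<lambda>y. C m y - C n y) = (\<lambda>y. (A m y - A n y) + (B m y - B n y))"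
        by (auto simp: C_def)
      have "pre_sq k (\<lambda>y. C m y - C n y) \<le> 2 * pre_sq k (\<lambda>y. A m y - A n y) + 2 * pre_sq k (\<lambda>y. B m y - B n y)"
        unfolding eq
        by (rule pre_sq_add_le[OF k]) (intro fin_diff fA fB)+
      also have "\<dots> < e" using N1[rule_format, of m n] N2[rule_format, of m n] mn by simp
      finally show "pre_sq k (\<lambda>y. C m y - C n y) < e" .
    qed
  qed
  then show ?thesis by (auto simp: rkhs_def)
qed

lemma rkhs_scale:
  assumes f: "f \<in> rkhs k"
  shows "(\<lambda>x. r * f x) \<in> rkhs k"
proof -
  obtain A where A: "rkhs_approx k f A" using f by (auto simp: rkhs_def)
  define C where "C n = (\<lambda>y. r * A n y)" for n
  have fA: "finite (fsupp (A n))" for n using A by (auto simp: rkhs_approx_def)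
  have fC: "finite (fsupp (C n))" for n
    unfolding C_def by (intro fin_scale fA)
  have pf: "pre_fun k (C n) x = r * pre_fun k (A n) x" for n x
  proof -
    have "pre_fun k (C n) x = (\<Sum>y\<in>fsupp (A n). C n y * k y x)"
      by (intro pre_fun_S fA) (auto simp: C_def fsupp_def)
    also have "\<dots> = r * pre_fun k (A n) x"
      by (simp add: C_def pre_fun_def sum_distrib_left mult.assoc)
    finally show ?thesis .
  qed
  have "rkhs_approx k (\<lambda>x. r * f x) C"
    unfolding rkhs_approx_def
  proof (intro conjI allI impI)
    show "finite (fsupp (C n))" for n by (rule fC)
    fix x
    show "(\<lambda>n. pre_fun k (C n) x) \<longlonglongrightarrow> r * f x"
      unfolding pf using A by (intro tendsto_mult tendsto_const) (auto simp: rkhs_approx_def)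
  next
    fix e :: real assume e: "e > 0"
    obtain N where N: "\<forall>m\<ge>N. \<forall>n\<ge>N. pre_sq k (\<lambda>y. A m y - A n y) < e / (r\<^sup>2 + 1)"
      using A e unfolding rkhs_approx_def by (meson divide_pos_pos add_nonneg_pos zero_le_power2 zero_less_one)
    show "\<exists>N. \<forall>m\<ge>N. \<forall>n\<ge>N. pre_sq k (\<lambda>y. C m y - C n y) < e"
    proof (intro exI[of _ N] allI impI)
      fix m n assume mn: "m \<ge> N" "n \<ge> N"
      have eq: "(\<lambda>y. C m y - C n y) = (\<lambda>y. r * (A m y - A n y))"
        by (auto simp: C_def algebra_simps)
      have fd: "finite (fsupp (\<lambda>y. A m y - A n y))"
        by (intro fin_diff fA)
      have "pre_sq k (\<lambda>y. C m y - C n y) = r\<^sup>2 * pre_sq k (\<lambda>y. A m y - A n y)"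
        unfolding eq by (rule pre_sq_scale[OF fd])
      also have "\<dots> \<le> r\<^sup>2 * (e / (r\<^sup>2 + 1))"
        using N mn by (intro mult_left_mono) (auto intro: less_imp_le)
      also have "\<dots> < e"
      proof -
        have "r\<^sup>2 * (e / (r\<^sup>2 + 1)) = e * (r\<^sup>2 / (r\<^sup>2 + 1))" by simp
        also have "\<dots> < e * 1"
        proof (intro mult_strict_left_mono e)
          have "r\<^sup>2 + 1 > 0" by (simp add: add_nonneg_pos)
          then show "r\<^sup>2 / (r\<^sup>2 + 1) < 1" by (simp add: divide_less_eq)
        qed
        finally show ?thesis by simp
      qed
      finally show "pre_sq k (\<lambda>y. C m y - C n y) < e" .
    qed
  qed
  then show ?thesis by (auto simp: rkhs_def)
qed

lemma rkhs_section: "(\<lambda>y. k x y) \<in> rkhs k"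
proof -
  define A where "A n = (\<lambda>y. if y = x then 1 else (0::real))" for n :: nat
  have fs: "fsupp (A n) = {x}" for n by (auto simp: A_def fsupp_def)
  have "rkhs_approx k (\<lambda>y. k x y) A"
    unfolding rkhs_approx_def
  proof (intro conjI allI impI)
    show "finite (fsupp (A n))" for n by (simp add: fs)
    show "(\<lambda>n. pre_fun k (A n) y) \<longlonglongrightarrow> k x y" for y
      unfolding pre_fun_def fs by (simp add: A_def)
    fix e :: real assume "e > 0"
    moreover have "fsupp (\<lambda>y. A m y - A n y) = {}" for m n by (auto simp: A_def fsupp_def)
    ultimately show "\<exists>N. \<forall>m\<ge>N. \<forall>n\<ge>N. pre_sq k (\<lambda>y. A m y - A n y) < e"
      by (simp add: pre_sq_def)
  qed
  then show ?thesis by (auto simp: rkhs_def)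
qed

context sk begin

lemma psdk_kmu:
  assumes psd: "psd_kernel (kc eps c)"
  shows "psdk (kmu eps c M)"
  unfolding psdk_def
proof (intro allI impI)
  fix a :: "'a \<Rightarrow> real" assume fa: "finite (fsupp a)"
  define E where "E y = exp (fp y / eps)" for y
  define b where "b y = a y * E y" for y
  have fs: "fsupp b = fsupp a" by (auto simp: b_def E_def fsupp_def)
  have "pre_sq (kc eps c) b \<ge> 0" using psd fa fs by (auto simp: psd_kernel_def)
  moreover have "pre_sq (kc eps c) b = pre_sq (kmu eps c M) a"
    unfolding pre_sq_def fs
  proof (intro sum.cong refl)
    fix y z
    have "(fp y + fp z - c y z) / eps = fp y / eps + fp z / eps + (- c y z / eps)"
      by (simp add: add_divide_distrib diff_divide_distrib)
    then have "kmu eps c M y z = E y * E z * kc eps c y z"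
      unfolding kmu_def E_def kc_def by (simp only: exp_add)
    then show "b y * b z * kc eps c y z = a y * a z * kmu eps c M y z"
      by (simp add: b_def)
  qed
  ultimately show "pre_sq (kmu eps c M) a \<ge> 0" by simp
qed

lemma supp_int0:
  fixes p :: "'a \<Rightarrow> real"
  assumes pc: "continuous_on UNIV p" and pn: "\<forall>x. p x \<le> 0" and ps: "\<forall>x\<in>msupport M. p x = 0"
  shows "integral\<^sup>L M p = 0"
proof -
  have null: "{x. p x \<le> - inverse (real (Suc n))} \<in> null_sets M" for n
  proof -
    define S where "S = {x. p x \<le> - inverse (real (Suc n))}"
    have cS: "closed S" unfolding S_def by (intro closed_Collect_le pc continuous_on_const)
    then have kS: "compact S" using closed_Int_compact[OF cS cpt] by simp
    define T where "T = {U. open U \<and> emeasure M U = 0}"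
    have "S \<subseteq> \<Union>T"
    proof
      fix x assume "x \<in> S"
      then have a1: "p x \<le> - inverse (real (Suc n))" unfolding S_def by simp
      have a2: "inverse (real (Suc n)) > 0" by simp
      from a1 a2 have "p x < 0" by linarith
      then have "x \<notin> msupport M" using ps by auto
      then obtain U where "open U" "x \<in> U" "\<not> emeasure M U > 0" unfolding msupport_def by auto
      then show "x \<in> \<Union>T" unfolding T_def by (auto simp: not_gr_zero)
    qed
    then obtain T' where T': "T' \<subseteq> T" "finite T'" "S \<subseteq> \<Union>T'"
      by (rule compactE[OF kS]) (auto simp: T_def)
    have "\<Union>(id ` T') \<in> null_sets M"
    proof (rule null_sets_UN')
      show "countable T'" using T'(2) by (rule countable_finite)
      fix U assume "U \<in> T'"
      then have "open U" "emeasure M U = 0" using T'(1) by (auto simp: T_def)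
      moreover have "U \<in> sets M" unfolding setsM by (rule borel_open) fact
      ultimately show "id U \<in> null_sets M" by (simp add: null_setsI)
    qed
    moreover have "S \<in> sets M" unfolding setsM by (rule borel_closed) fact
    moreover have "S \<subseteq> \<Union>(id ` T')" using T'(3) by simp
    ultimately have "S \<in> null_sets M" by (rule null_sets_subset)
    then show ?thesis unfolding S_def .
  qed
  have "AE x in M. \<not> p x \<le> - inverse (real (Suc n))" for n
    by (rule AE_I'[OF null]) auto
  then have "AE x in M. \<forall>n. \<not> p x \<le> - inverse (real (Suc n))"
    by (simp add: AE_all_countable)
  then have ae: "AE x in M. p x = 0"
  proof (rule AE_mp, intro AE_I2 impI)
    fix x assume h: "\<forall>n. \<not> p x \<le> - inverse (real (Suc n))"
    show "p x = 0"
    proof (rule ccontr)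
      assume "p x \<noteq> 0"
      then have "- p x > 0" using pn by (simp add: less_le)
      then obtain n where "inverse (real (Suc n)) < - p x" using reals_Archimedean by blast
      then show False using h[rule_format, of n] by linarith
    qed
  qed
  have "integral\<^sup>L M p = integral\<^sup>L M (\<lambda>_. 0)"
    by (rule integral_cong_AE) (simp_all add: meas pc ae)
  then show ?thesis by simp
qed

end

lemma aux_div: "(- a - k * b) / (c::real) = - (a / c) - k * (b / c)"
  by (simp add: diff_divide_distrib)

lemma main_point:
  fixes eps :: real and c :: "'a::metric_space \<Rightarrow> 'a \<Rightarrow> real"
    and V :: "'a \<Rightarrow> real" and \<mu> :: "real \<Rightarrow> 'a measure"
    and u p :: "'a \<Rightarrow> real"
  assumes cpt: "compact (UNIV :: 'a set)"
    and eps: "eps > 0"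
    and csym: "\<forall>x y. c x y = c y x" and cnn: "\<forall>x y. c x y \<ge> 0"
    and ccont: "continuous_on UNIV (\<lambda>(x, y). c x y)"
    and psd: "psd_kernel (kc eps c)"
    and Vc: "continuous_on UNIV V"
    and probs: "\<forall>s\<ge>0. is_prob (\<mu> s)"
    and t: "t > 0"
    and wd: "wstar_deriv eps c \<mu> t \<sigma>"
    and uc: "continuous_on UNIV u"
    and ueq: "\<forall>x. u x - Kop eps c (\<mu> t) (Kop eps c (\<mu> t) u) x - Hmap eps c (\<mu> t) \<sigma> x = C'"
    and pc: "continuous_on UNIV p" and pneg: "\<forall>x. p x \<le> 0"
    and psupp: "\<forall>x\<in>msupport (\<mu> t). p x = 0"
    and Veq: "\<forall>x. eps / 2 * u x + V x + p x = C"
    and diff: "(\<lambda>s. energy V (\<mu> s)) differentiable (at t within {0..})"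
  shows "\<exists>\<sigma>. wstar_deriv eps c \<mu> t \<sigma> \<and>
              ((\<lambda>s. energy V (\<mu> s)) has_real_derivative (- gmetric eps c (\<mu> t) \<sigma> \<sigma>)) (at t within {0..})"
proof -
  have sks: "sk eps c (\<mu> s)" if "s \<ge> 0" for s
    using cpt eps csym cnn ccont probs that by unfold_locales auto
  interpret sk eps c "\<mu> t" using sks t by simp
  define En where "En s = energy V (\<mu> s)" for s
  obtain D0 where D0: "(En has_real_derivative D0) (at t within {0..})"
    using diff unfolding En_def[abs_def] real_differentiable_def by blast
  define K where "K = kmu eps c (\<mu> t)"
  define H where "H = Hmap eps c (\<mu> t) \<sigma>"
  define u0 where "u0 = inv_res eps c (\<mu> t) H"
  have u0spec: "continuous_on UNIV u0 \<and> (\<exists>C1. \<forall>x. u0 x - Kop eps c (\<mu> t) (Kop eps c (\<mu> t) u0) x - H x = C1)"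
    unfolding u0_def inv_res_def by (rule someI[of _ u]) (use uc ueq H_def in auto)
  have psdK: "psdk K" unfolding K_def by (rule psdk_kmu[OF psd])
  have wdd: "in_dual K \<sigma>"
    and wdl: "\<And>\<phi>. \<phi> \<in> rkhs K \<Longrightarrow>
        ((\<lambda>s. ((\<integral>x. \<phi> x \<partial>\<mu> s) - (\<integral>x. \<phi> x \<partial>\<mu> t)) / (s - t)) \<longlongrightarrow> \<sigma> \<phi>) (at t within {0..})"
    using wd unfolding wstar_deriv_def K_def by auto
  have gm: "gmetric eps c (\<mu> t) \<sigma>' \<sigma>' = eps / 2 * \<sigma>' u0"
    if "\<And>x. \<sigma>' (\<lambda>y. K x y) = \<sigma> (\<lambda>y. K x y)" for \<sigma>'
  proof -
    have "Hmap eps c (\<mu> t) \<sigma>' = H" unfolding H_def Hmap_def using that by (simp add: K_def)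
    then show ?thesis unfolding gmetric_def u0_def by simp
  qed
  show ?thesis
  proof (cases "u0 \<in> rkhs K")
    case False
    define \<sigma>' where "\<sigma>' = \<sigma>(u0 := - 2 * D0 / eps)"
    have agree: "\<sigma>' \<phi> = \<sigma> \<phi>" if "\<phi> \<in> rkhs K" for \<phi>
      using that False unfolding \<sigma>'_def by auto
    have "in_dual K \<sigma>'"
      unfolding in_dual_def
    proof (intro conjI ballI allI)
      fix f g assume f: "f \<in> rkhs K" and g: "g \<in> rkhs K"
      have "(\<lambda>x. f x + g x) \<in> rkhs K" by (rule rkhs_add[OF psdK f g])
      then show "\<sigma>' (\<lambda>x. f x + g x) = \<sigma>' f + \<sigma>' g"
        using wdd f g agree unfolding in_dual_def by simp
    next
      fix f r assume f: "f \<in> rkhs K"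
      have "(\<lambda>x. r * f x) \<in> rkhs K" by (rule rkhs_scale[OF f])
      then show "\<sigma>' (\<lambda>x. r * f x) = r * \<sigma>' f"
        using wdd f agree unfolding in_dual_def by simp
    next
      obtain Cb where "\<forall>f\<in>rkhs K. \<bar>\<sigma> f\<bar> \<le> Cb * rkhs_norm K f" using wdd unfolding in_dual_def by blast
      then show "\<exists>Cb. \<forall>f\<in>rkhs K. \<bar>\<sigma>' f\<bar> \<le> Cb * rkhs_norm K f" using agree by auto
    qed
    then have wd': "wstar_deriv eps c \<mu> t \<sigma>'"
      unfolding wstar_deriv_def using wdl agree by (auto simp: K_def)
    have "gmetric eps c (\<mu> t) \<sigma>' \<sigma>' = eps / 2 * \<sigma>' u0"
      by (rule gm) (rule agree, rule rkhs_section)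
    also have "\<dots> = - D0" using eps by (simp add: \<sigma>'_def)
    finally have "- gmetric eps c (\<mu> t) \<sigma>' \<sigma>' = D0" by simp
    then show ?thesis using wd' D0 unfolding En_def[abs_def] by auto
  next
    case True
    obtain C1 where u0c: "continuous_on UNIV u0"
      and u0eq: "\<forall>x. u0 x - Kop eps c (\<mu> t) (Kop eps c (\<mu> t) u0) x - H x = C1"
      using u0spec by blast
    define d where "d x = u0 x - u x" for x
    have dc: "continuous_on UNIV d" unfolding d_def by (intro continuous_intros u0c uc)
    have kd: "Kop eps c (\<mu> t) d = (\<lambda>x. Kop eps c (\<mu> t) u0 x - Kop eps c (\<mu> t) u x)"
      unfolding d_def using Kop_diff[OF u0c uc] by auto
    have kkd: "Kop eps c (\<mu> t) (Kop eps c (\<mu> t) d) x =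
       Kop eps c (\<mu> t) (Kop eps c (\<mu> t) u0) x - Kop eps c (\<mu> t) (Kop eps c (\<mu> t) u) x" for x
      unfolding kd using Kop_diff[OF Kop_cont[OF u0c] Kop_cont[OF uc], of x] by simp
    have deq: "\<forall>x. d x - Kop eps c (\<mu> t) (Kop eps c (\<mu> t) d) x = C1 - C'"
    proof
      fix x
      show "d x - Kop eps c (\<mu> t) (Kop eps c (\<mu> t) d) x = C1 - C'"
        using u0eq[rule_format, of x] ueq[rule_format, of x] unfolding kkd d_def H_def by linarith
    qed
    have dconst: "\<forall>x. d x = d x0" by (rule max_principle[OF dc deq])
    define del where "del = d x0"
    define K0 where "K0 = C + eps / 2 * del"
    have Vform: "V = (\<lambda>x. K0 - p x - eps / 2 * u0 x)"
    proof
      fix x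
      have "u x = u0 x - del" using dconst[rule_format, of x] unfolding del_def d_def by simp
      then have "u0 x = u x + del" by simp
      then have "eps / 2 * u0 x = eps / 2 * u x + eps / 2 * del" by (simp add: distrib_left)
      then show "V x = K0 - p x - eps / 2 * u0 x"
        using Veq[rule_format, of x] unfolding K0_def by linarith
    qed
    define P where "P s = (\<integral>x. p x \<partial>\<mu> s)" for s
    define U where "U s = (\<integral>x. u0 x \<partial>\<mu> s)" for s
    have Eform: "En s = K0 - P s - eps / 2 * U s" if s: "s \<ge> 0" for s
    proof -
      interpret S: sk eps c "\<mu> s" by (rule sks[OF s])
      have i1: "integrable (\<mu> s) p" by (rule S.integ[OF pc])
      have i2: "integrable (\<mu> s) u0" by (rule S.integ[OF u0c])
      have i3: "integrable (\<mu> s) (\<lambda>x. K0 - p x)" by (intro S.integ continuous_intros pc)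
      have "En s = (\<integral>x. K0 - p x - eps / 2 * u0 x \<partial>\<mu> s)"
        unfolding En_def energy_def Vform ..
      also have "\<dots> = K0 - P s - eps / 2 * U s"
        using i1 i2 i3 S.integ[OF continuous_on_const[of UNIV K0]] prob_space.prob_space[OF S.ps] unfolding P_def U_def by simp
      finally show ?thesis .
    qed
    have Pt: "P t = 0" unfolding P_def by (rule supp_int0[OF pc pneg psupp])
    have Ps: "P s \<le> 0" if s: "s \<ge> 0" for s
    proof -
      interpret S: sk eps c "\<mu> s" by (rule sks[OF s])
      have "P s \<le> (\<integral>x. 0 \<partial>\<mu> s)" unfolding P_def
        by (rule integral_mono) (auto intro: S.integ pc pneg[rule_format])
      then show ?thesis by simp
    qed
    define F where "F = at t within {0::real..}"
    have Fat: "F = at t" unfolding F_def using t by (intro at_within_interior) (simp add: interior_real_atLeast)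
    have Uq: "((\<lambda>s. (U s - U t) / (s - t)) \<longlongrightarrow> \<sigma> u0) F"
      using wdl[OF True] unfolding U_def F_def .
    have Eq: "((\<lambda>s. (En s - En t) / (s - t)) \<longlongrightarrow> D0) F"
      using D0 unfolding F_def has_field_derivative_iff .
    have lim0: "((\<lambda>s. - ((En s - En t) / (s - t)) - eps / 2 * ((U s - U t) / (s - t))) \<longlongrightarrow> - D0 - eps / 2 * \<sigma> u0) F"
      by (intro tendsto_intros Eq Uq)
    have ev: "\<forall>\<^sub>F s in F. - ((En s - En t) / (s - t)) - eps / 2 * ((U s - U t) / (s - t)) = (P s - P t) / (s - t)"
      unfolding F_def eventually_at_filter
    proof (rule always_eventually, intro allI impI)
      fix s :: real assume st: "s \<noteq> t" and s: "s \<in> {0..}"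
      have "P s - P t = - (En s - En t) - eps / 2 * (U s - U t)"
      proof -
        have "eps / 2 * (U s - U t) = eps / 2 * U s - eps / 2 * U t" by (simp add: right_diff_distrib)
        moreover have "En s = K0 - P s - eps / 2 * U s" using Eform[of s] s by simp
        moreover have "En t = K0 - P t - eps / 2 * U t" using Eform[of t] t by simp
        ultimately show ?thesis by linarith
      qed
      then have "(P s - P t) / (s - t) = (- (En s - En t) - eps / 2 * (U s - U t)) / (s - t)" by simp
      also have "\<dots> = - ((En s - En t) / (s - t)) - eps / 2 * ((U s - U t) / (s - t))"
        by (rule aux_div)
      finally show "- ((En s - En t) / (s - t)) - eps / 2 * ((U s - U t) / (s - t)) = (P s - P t) / (s - t)"
        by simp
    qed
    have limP: "((\<lambda>s. (P s - P t) / (s - t)) \<longlongrightarrow> - D0 - eps / 2 * \<sigma> u0) (at t)"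
      using Lim_transform_eventually[OF lim0 ev] unfolding Fat .
    then have limR: "((\<lambda>s. (P s - P t) / (s - t)) \<longlongrightarrow> - D0 - eps / 2 * \<sigma> u0) (at_right t)"
      and limL: "((\<lambda>s. (P s - P t) / (s - t)) \<longlongrightarrow> - D0 - eps / 2 * \<sigma> u0) (at_left t)"
      by (auto simp: filterlim_at_split)
    have evR: "\<forall>\<^sub>F s in at_right t. (P s - P t) / (s - t) \<le> 0"
    proof (rule eventually_mono[OF eventually_at_right_real[of t "t + 1"]])
      fix s assume "s \<in> {t<..<t + 1}"
      then have "s \<ge> 0" "s - t > 0" using t by auto
      then show "(P s - P t) / (s - t) \<le> 0" using Ps[of s] Pt by (simp add: divide_nonpos_pos)
    qed simp
    have evL: "\<forall>\<^sub>F s in at_left t. 0 \<le> (P s - P t) / (s - t)"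
    proof (rule eventually_mono[OF eventually_at_left_real[of 0 t]])
      show "0 < t" by (rule t)
      fix s assume "s \<in> {0<..<t}"
      then have "s \<ge> 0" "s - t < 0" by auto
      then show "0 \<le> (P s - P t) / (s - t)" using Ps[of s] Pt by (simp add: divide_nonpos_neg)
    qed
    have "- D0 - eps / 2 * \<sigma> u0 \<le> 0"
      by (rule tendsto_upperbound[OF limR evR trivial_limit_at_right_real])
    moreover have "0 \<le> - D0 - eps / 2 * \<sigma> u0"
      by (rule tendsto_lowerbound[OF limL evL trivial_limit_at_left_real])
    ultimately have D0eq: "D0 = - (eps / 2 * \<sigma> u0)" by linarith
    have "gmetric eps c (\<mu> t) \<sigma> \<sigma> = eps / 2 * \<sigma> u0" by (rule gm) simp
    then have "- gmetric eps c (\<mu> t) \<sigma> \<sigma> = D0" using D0eq by simp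
    then show ?thesis using wd D0 unfolding En_def[abs_def] by auto
  qed
qed

theorem mainTheorem12:
  fixes eps :: real and c :: "'a::metric_space \<Rightarrow> 'a \<Rightarrow> real"
    and V :: "'a \<Rightarrow> real" and \<mu> :: "real \<Rightarrow> 'a measure"
  assumes "compact (UNIV :: 'a set)"
    and "eps > 0"
    and "\<forall>x y. c x y = c y x" and "\<forall>x y. c x y \<ge> 0"
    and "continuous_on UNIV (\<lambda>(x, y). c x y)"
    and "psd_kernel (kc eps c)" and "universal_kernel (kc eps c)"
    and "continuous_on UNIV V"
    and "sinkhorn_flow eps c V \<mu>"
  shows "AE t in lborel. t \<ge> 0 \<longrightarrow>
           (\<lambda>s. energy V (\<mu> s)) differentiable (at t within {0..}) \<longrightarrow>
           (\<exists>\<sigma>. wstar_deriv eps c \<mu> t \<sigma> \<and>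
              ((\<lambda>s. energy V (\<mu> s)) has_real_derivative (- gmetric eps c (\<mu> t) \<sigma> \<sigma>)) (at t within {0..}))"
proof -
  have probs: "\<forall>t\<ge>0. is_prob (\<mu> t)" using assms(9) unfolding sinkhorn_flow_def by auto
  have fl: "AE t in lborel. t \<ge> 0 \<longrightarrow>
        (\<exists>\<sigma>. wstar_deriv eps c \<mu> t \<sigma> \<and> in_T eps c (\<mu> t) \<sigma> \<and>
           (\<exists>u p C. continuous_on UNIV u \<and>
              (\<exists>C'. \<forall>x. u x - Kop eps c (\<mu> t) (Kop eps c (\<mu> t) u) x - Hmap eps c (\<mu> t) \<sigma> x = C') \<and>
              continuous_on UNIV p \<and> (\<forall>x. p x \<le> 0) \<and> (\<forall>x\<in>msupport (\<mu> t). p x = 0) \<and>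
              (\<forall>x. eps / 2 * u x + V x + p x = C)))"
    using assms(9) unfolding sinkhorn_flow_def by auto
  show ?thesis
    using fl AE_lborel_singleton[of 0]
  proof eventually_elim
    case (elim t)
    show ?case
    proof (intro impI)
      assume t0: "t \<ge> 0" and diff: "(\<lambda>s. energy V (\<mu> s)) differentiable (at t within {0..})"
      have t: "t > 0" using t0 elim(2) by simp
      from elim(1) t0 obtain \<sigma> u p C C' where wd: "wstar_deriv eps c \<mu> t \<sigma>"
        and uc: "continuous_on UNIV u"
        and ueq: "\<forall>x. u x - Kop eps c (\<mu> t) (Kop eps c (\<mu> t) u) x - Hmap eps c (\<mu> t) \<sigma> x = C'"
        and pc: "continuous_on UNIV p" and pneg: "\<forall>x. p x \<le> 0"
        and psupp: "\<forall>x\<in>msupport (\<mu> t). p x = 0"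
        and Veq: "\<forall>x. eps / 2 * u x + V x + p x = C"
        by blast
      show "\<exists>\<sigma>. wstar_deriv eps c \<mu> t \<sigma> \<and>
              ((\<lambda>s. energy V (\<mu> s)) has_real_derivative (- gmetric eps c (\<mu> t) \<sigma> \<sigma>)) (at t within {0..})"
        by (rule main_point[OF assms(1-6) assms(8) probs t wd uc ueq pc pneg psupp Veq diff])
    qed
  qed
qed

end
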